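(* For fixed $\vec a=(a,\hat a)\in\mathcal M$, the space $\mathcal H\times\mathcal H$ is a commutative associative algebra with respect to the multiplication $(\omega_1,\hat\omega_1)\circ(\omega_2,\hat\omega_2)=\big(\omega_2(\omega_1a')_+-\omega_1(\omega_2a')_--\omega_2(\hat\omega_1\hat a')_--\omega_1(\hat\omega_2\hat a')_-,\ \hat\omega_2(\hat\omega_1\hat a')_+-\hat\omega_1(\hat\omega_2\hat a')_-+\hat\omega_1(\omega_2a')_++\hat\omega_2(\omega_1a')_+\big)$.
   Context: Fix $m\ge1$, positive integers $n_0,\dots,n_m$, nonzero integers $d_1,\dots,d_m$; $D_1,\dots,D_m\subset\mathbb C$ pairwise disjoint closed disks, $\gamma_i=\partial D_i$ positively oriented, $\mathbf D^{int}=\bigcup(D_i\setminus\gamma_i)$, $\mathbf D^{ext}=\mathbb P^1\setminus\bigcup D_i$; $\mathcal H$ = germs of functions holomorphic near $\bigcup\gamma_i$; for $f\in\mathcal H$, $f_+(z)=\frac1{2\pi\mathrm i}\sum_s\oint_{\gamma_s}\frac{f(p)}{p-z}dp$ ($z$ inside the disks), $f_-=-(\text{same})$ ($z$ outside), $f_-(\infty)=0$, so $f=f_++f_-$ near the circles. $\mathcal M$: pairs $(a,\hat a)\in\mathcal H\times\mathcal H$, $a$ meromorphic on $\mathbf D^{ext}$, only pole $\infty$, $a=z^{n_0}+a_{n_0-2}z^{n_0-2}+\cdots$; $\hat a$ meromorphic on $\mathbf D^{int}$, only poles $\varphi_j\in D_j\setminus\gamma_j$, $\hat a=\hat a_{j,-n_j}(z-\varphi_j)^{-n_j}+\cdots$,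 $\hat a_{j,-n_j}\ne0$; $a-\hat a=w_j^{d_j}$ on $\gamma_j$, $w_j$ holomorphic near $\gamma_j$, $w_j'\ne0$, $w_j(\gamma_j)$ winding once about $0$. $'=\partial_z$. *)

theory Defs
  imports "HOL-Complex_Analysis.Complex_Analysis" "HOL-Library.Landau_Symbols"
begin

definition circles :: "(nat \<Rightarrow> complex) \<Rightarrow> (nat \<Rightarrow> real) \<Rightarrow> nat \<Rightarrow> complex set" where
  "circles c r m = (\<Union>i\<in>{1..m}. sphere (c i) (r i))"

definition Dint :: "(nat \<Rightarrow> complex) \<Rightarrow> (nat \<Rightarrow> real) \<Rightarrow> nat \<Rightarrow> complex set" where
  "Dint c r m = (\<Union>i\<in>{1..m}. ball (c i) (r i))"

text \<open>Finite part of the exterior (the point at infinity is handled separately).\<close>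
definition Dext :: "(nat \<Rightarrow> complex) \<Rightarrow> (nat \<Rightarrow> real) \<Rightarrow> nat \<Rightarrow> complex set" where
  "Dext c r m = - (\<Union>i\<in>{1..m}. cball (c i) (r i))"

text \<open>Representatives of germs in H: holomorphic on some open neighbourhood of the circles.\<close>
definition inH :: "(nat \<Rightarrow> complex) \<Rightarrow> (nat \<Rightarrow> real) \<Rightarrow> nat \<Rightarrow> (complex \<Rightarrow> complex) \<Rightarrow> bool" where
  "inH c r m f \<longleftrightarrow> (\<exists>U. open U \<and> circles c r m \<subseteq> U \<and> f holomorphic_on U)"

definition germ_eq :: "(nat \<Rightarrow> complex) \<Rightarrow> (nat \<Rightarrow> real) \<Rightarrow> nat \<Rightarrow> (complex \<Rightarrow> complex) \<Rightarrow> (complex \<Rightarrow> complex) \<Rightarrow> bool" where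
  "germ_eq c r m f g \<longleftrightarrow> (\<exists>U. open U \<and> circles c r m \<subseteq> U \<and> (\<forall>z\<in>U. f z = g z))"

definition cauchy_sum :: "(nat \<Rightarrow> complex) \<Rightarrow> (nat \<Rightarrow> real) \<Rightarrow> nat \<Rightarrow> (complex \<Rightarrow> complex) \<Rightarrow> complex \<Rightarrow> complex" where
  "cauchy_sum c r m f z =
     (1 / (2 * of_real pi * \<i>)) * (\<Sum>s=1..m. contour_integral (circlepath (c s) (r s)) (\<lambda>p. f p / (p - z)))"

text \<open>f_+ : the germ at the circles of (the holomorphic continuation of) the Cauchy integral taken
  for z inside the disks; f_- : likewise for minus the Cauchy integral taken for z outside.\<close>
definition plus_part :: "(nat \<Rightarrow> complex) \<Rightarrow> (nat \<Rightarrow> real) \<Rightarrow> nat \<Rightarrow> (complex \<Rightarrow> complex) \<Rightarrow> (complex \<Rightarrow> complex)" where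
  "plus_part c r m f = (SOME g. inH c r m g \<and>
      (\<exists>V. open V \<and> circles c r m \<subseteq> V \<and> (\<forall>z\<in>V \<inter> Dint c r m. g z = cauchy_sum c r m f z)))"

definition minus_part :: "(nat \<Rightarrow> complex) \<Rightarrow> (nat \<Rightarrow> real) \<Rightarrow> nat \<Rightarrow> (complex \<Rightarrow> complex) \<Rightarrow> (complex \<Rightarrow> complex)" where
  "minus_part c r m f = (SOME g. inH c r m g \<and>
      (\<exists>V. open V \<and> circles c r m \<subseteq> V \<and> (\<forall>z\<in>V \<inter> Dext c r m. g z = - cauchy_sum c r m f z)))"

definition circ_prod :: "(nat \<Rightarrow> complex) \<Rightarrow> (nat \<Rightarrow> real) \<Rightarrow> nat \<Rightarrow> (complex \<Rightarrow> complex) \<Rightarrow> (complex \<Rightarrow> complex)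
   \<Rightarrow> (complex \<Rightarrow> complex) \<times> (complex \<Rightarrow> complex) \<Rightarrow> (complex \<Rightarrow> complex) \<times> (complex \<Rightarrow> complex)
   \<Rightarrow> (complex \<Rightarrow> complex) \<times> (complex \<Rightarrow> complex)" where
  "circ_prod c r m a ah x y =
    (let w1 = fst x; wh1 = snd x; w2 = fst y; wh2 = snd y;
         P = plus_part c r m; M = minus_part c r m
     in (\<lambda>z. w2 z * P (\<lambda>p. w1 p * deriv a p) z - w1 z * M (\<lambda>p. w2 p * deriv a p) z
             - w2 z * M (\<lambda>p. wh1 p * deriv ah p) z - w1 z * M (\<lambda>p. wh2 p * deriv ah p) z,
         \<lambda>z. wh2 z * P (\<lambda>p. wh1 p * deriv ah p) z - wh1 z * M (\<lambda>p. wh2 p * deriv ah p) z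
             + wh1 z * P (\<lambda>p. w2 p * deriv a p) z + wh2 z * P (\<lambda>p. w1 p * deriv a p) z))"

definition inHH :: "(nat \<Rightarrow> complex) \<Rightarrow> (nat \<Rightarrow> real) \<Rightarrow> nat \<Rightarrow> (complex \<Rightarrow> complex) \<times> (complex \<Rightarrow> complex) \<Rightarrow> bool" where
  "inHH c r m x \<longleftrightarrow> inH c r m (fst x) \<and> inH c r m (snd x)"

definition germ_eq2 :: "(nat \<Rightarrow> complex) \<Rightarrow> (nat \<Rightarrow> real) \<Rightarrow> nat \<Rightarrow> (complex \<Rightarrow> complex) \<times> (complex \<Rightarrow> complex)
   \<Rightarrow> (complex \<Rightarrow> complex) \<times> (complex \<Rightarrow> complex) \<Rightarrow> bool" where
  "germ_eq2 c r m x y \<longleftrightarrow> germ_eq c r m (fst x) (fst y) \<and> germ_eq c r m (snd x) (snd y)"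

definition lin2 :: "complex \<Rightarrow> (complex \<Rightarrow> complex) \<times> (complex \<Rightarrow> complex) \<Rightarrow> (complex \<Rightarrow> complex) \<times> (complex \<Rightarrow> complex)
   \<Rightarrow> (complex \<Rightarrow> complex) \<times> (complex \<Rightarrow> complex)" where
  "lin2 \<alpha> x y = (\<lambda>z. \<alpha> * fst x z + fst y z, \<lambda>z. \<alpha> * snd x z + snd y z)"

end

theory Submission
  imports Defs
begin

lemma annulus_eq:
  assumes "0 < \<rho>1" "\<rho>1 \<le> \<rho>2" "open S" "f holomorphic_on S"
    and ann: "\<And>p. \<rho>1 \<le> norm (p - c) \<Longrightarrow> norm (p - c) \<le> \<rho>2 \<Longrightarrow> p \<in> S"
  shows "contour_integral (circlepath c \<rho>1) f = contour_integral (circlepath c \<rho>2) f"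
proof (rule Cauchy_theorem_homotopic_loops[OF _ assms(3,4)])
  show "homotopic_loops S (circlepath c \<rho>1) (circlepath c \<rho>2)"
  proof (rule homotopic_loops_linear)
    fix t :: real and x assume "t \<in> {0..1}"
    show "closed_segment (circlepath c \<rho>1 t) (circlepath c \<rho>2 t) \<subseteq> S"
    proof
      fix y assume "y \<in> closed_segment (circlepath c \<rho>1 t) (circlepath c \<rho>2 t)"
      then obtain u where u: "0 \<le> u" "u \<le> 1" and y: "y = (1 - u) *\<^sub>R circlepath c \<rho>1 t + u *\<^sub>R circlepath c \<rho>2 t"
        unfolding closed_segment_def by auto
      define e where "e = exp (2 * of_real pi * \<i> * of_real t)"
      have ne: "norm e = 1" unfolding e_def by (simp add: norm_exp_i_times[of "2*pi*t", simplified] )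
      define q where "q = (1-u)*\<rho>1 + u*\<rho>2"
      have q0: "q \<ge> 0" unfolding q_def using u assms(1,2) by simp
      have "y - c = of_real q * e"
        unfolding y circlepath e_def q_def by (simp add: scaleR_conv_of_real algebra_simps)
      hence "norm (y - c) = norm (of_real q * e)" by simp
      also have "\<dots> = q" using ne q0 by (simp only: norm_mult norm_of_real) simp?
      finally have ny: "norm (y - c) = (1-u)*\<rho>1 + u*\<rho>2" unfolding q_def .
      have "\<rho>1 \<le> (1-u)*\<rho>1 + u*\<rho>2"
      proof -
        have "u*\<rho>1 \<le> u*\<rho>2" using u assms(2) by (intro mult_left_mono) auto
        thus ?thesis by (simp add: algebra_simps)
      qed
      moreover have "(1-u)*\<rho>1 + u*\<rho>2 \<le> \<rho>2"
      proof -
        have "(1-u)*\<rho>1 \<le> (1-u)*\<rho>2" using u assms(2) by (intro mult_left_mono) auto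
        thus ?thesis by (simp add: algebra_simps)
      qed
      ultimately show "y \<in> S" using ann ny by simp
    qed
  qed auto
qed auto


lemma cauchy_hol_circ:
  assumes "continuous_on (sphere c \<bar>\<rho>\<bar>) f"
  shows "(\<lambda>w. contour_integral (circlepath c \<rho>) (\<lambda>u. f u / (u - w))) holomorphic_on (- sphere c \<bar>\<rho>\<bar>)"
proof -
  have op: "open (- sphere c \<bar>\<rho>\<bar>)" by (simp add: open_Compl)
  have int: "((\<lambda>u. f u / (u - w)^1) has_contour_integral contour_integral (circlepath c \<rho>) (\<lambda>u. f u / (u - w))) (circlepath c \<rho>)"
    if "w \<in> UNIV - path_image (circlepath c \<rho>)" for w
  proof -
    have "continuous_on (sphere c \<bar>\<rho>\<bar>) (\<lambda>u. f u / (u - w))"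
      using that assms by (intro continuous_intros) auto
    hence "(\<lambda>u. f u / (u - w)) contour_integrable_on (circlepath c \<rho>)"
      by (intro contour_integrable_continuous_circlepath) simp
    thus ?thesis by (simp add: has_contour_integral_integral)
  qed
  have "\<exists>f'. ((\<lambda>w. contour_integral (circlepath c \<rho>) (\<lambda>u. f u / (u - w))) has_field_derivative f') (at w)"
    if "w \<in> - sphere c \<bar>\<rho>\<bar>" for w
  proof -
    have "continuous_on (path_image (circlepath c \<rho>)) f" using assms by simp
    from Cauchy_next_derivative(2)[where B="2*pi*\<bar>\<rho>\<bar>" and k=1 and S=UNIV and w=w, OF this _ int]
    show ?thesis using that
      by (auto simp: vector_derivative_circlepath norm_mult)
  qed
  thus ?thesis using op by (simp add: holomorphic_on_open)
qed

lemma annulus_cauchy: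
  assumes "0 < \<rho>1" "\<rho>1 < norm (z - c)" "norm (z - c) < \<rho>2" "open S" "f holomorphic_on S"
    and ann: "\<And>p. \<rho>1 \<le> norm (p - c) \<Longrightarrow> norm (p - c) \<le> \<rho>2 \<Longrightarrow> p \<in> S"
  shows "contour_integral (circlepath c \<rho>2) (\<lambda>p. f p / (p - z)) - contour_integral (circlepath c \<rho>1) (\<lambda>p. f p / (p - z))
          = 2 * of_real pi * \<i> * f z"
proof -
  define g where "g = (\<lambda>p. if p = z then deriv f z else (f p - f z) / (p - z))"
  have zS: "z \<in> S" using ann assms by simp
  have gh: "g holomorphic_on S" unfolding g_def
    using pole_lemma[OF assms(5), of z] zS assms(4) by (simp add: interior_open)
  have sub1: "path_image (circlepath c \<rho>1) \<subseteq> S" and sub2: "path_image (circlepath c \<rho>2) \<subseteq> S"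
    using ann assms(1-3) by (auto simp: dist_norm norm_minus_commute)
  have eqg: "contour_integral (circlepath c \<rho>1) g = contour_integral (circlepath c \<rho>2) g"
    using annulus_eq[OF assms(1) _ assms(4) gh ann] assms(2,3) by simp
  have G1: "(g has_contour_integral contour_integral (circlepath c \<rho>1) g) (circlepath c \<rho>1)"
    using contour_integrable_holomorphic_simple[OF gh assms(4) _ sub1] has_contour_integral_integral by auto
  have G2: "(g has_contour_integral contour_integral (circlepath c \<rho>2) g) (circlepath c \<rho>2)"
    using contour_integrable_holomorphic_simple[OF gh assms(4) _ sub2] has_contour_integral_integral by auto
  have K2: "((\<lambda>u. 1 / (u - z)) has_contour_integral (2 * of_real pi * \<i> * 1)) (circlepath c \<rho>2)"
    using Cauchy_integral_circlepath_simple[of "\<lambda>_. 1" c \<rho>2 z] assms(3) by simp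
  have K1: "((\<lambda>u. 1 / (u - z)) has_contour_integral 0) (circlepath c \<rho>1)"
  proof (rule Cauchy_theorem_convex_simple[of _ "ball c (norm (z - c))"])
    show "(\<lambda>u. 1 / (u - z)) holomorphic_on ball c (cmod (z - c))"
      by (intro holomorphic_intros) (auto simp: dist_norm norm_minus_commute)
    show "path_image (circlepath c \<rho>1) \<subseteq> ball c (cmod (z - c))"
      using assms(1,2) by (auto simp: dist_norm norm_minus_commute)
  qed auto
  have H2: "((\<lambda>p. f p / (p - z)) has_contour_integral (contour_integral (circlepath c \<rho>2) g + f z * (2 * of_real pi * \<i> * 1))) (circlepath c \<rho>2)"
  proof (rule has_contour_integral_eq[OF has_contour_integral_add[OF G2 has_contour_integral_lmul[OF K2]]])
    fix x assume "x \<in> path_image (circlepath c \<rho>2)"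
    hence "x \<noteq> z" using assms(1-3) by (auto simp: dist_norm norm_minus_commute)
    thus "g x + f z * (1 / (x - z)) = f x / (x - z)" unfolding g_def by (simp add: diff_divide_distrib)
  qed
  have H1: "((\<lambda>p. f p / (p - z)) has_contour_integral (contour_integral (circlepath c \<rho>1) g + f z * 0)) (circlepath c \<rho>1)"
  proof (rule has_contour_integral_eq[OF has_contour_integral_add[OF G1 has_contour_integral_lmul[OF K1]]])
    fix x assume "x \<in> path_image (circlepath c \<rho>1)"
    hence "x \<noteq> z" using assms(1-3) by (auto simp: dist_norm norm_minus_commute)
    thus "g x + f z * (1 / (x - z)) = f x / (x - z)" unfolding g_def by (simp add: diff_divide_distrib)
  qed
  show ?thesis using contour_integral_unique[OF H1] contour_integral_unique[OF H2] eqg by simp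
qed

lemma cauchy_limit:
  assumes r: "0 < \<rho>" and cf: "continuous_on (sphere c \<rho>) f"
  shows "((\<lambda>z. z * contour_integral (circlepath c \<rho>) (\<lambda>p. f p / (p - z)))
           \<longlongrightarrow> - contour_integral (circlepath c \<rho>) f) at_infinity"
proof -
  define I where "I = contour_integral (circlepath c \<rho>) f"
  have "compact ((\<lambda>p. f p * p) ` sphere c \<rho>)"
    by (intro compact_continuous_image continuous_intros cf) simp
  then obtain B where B0: "B > 0" and B: "\<And>p. p \<in> sphere c \<rho> \<Longrightarrow> norm (f p * p) \<le> B"
    using compact_imp_bounded[THEN iffD1[OF bounded_pos]] by (smt (verit) image_eqI)
  define K where "K = norm c + \<rho>"
  have fint: "f contour_integrable_on circlepath c \<rho>"
    using cf r by (intro contour_integrable_continuous_circlepath) simp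
  have ev: "eventually (\<lambda>z. norm (z * contour_integral (circlepath c \<rho>) (\<lambda>p. f p / (p - z)) - - I)
             \<le> B * (2 * pi * \<rho>) / (norm z - K)) at_infinity"
    unfolding eventually_at_infinity
  proof (intro exI allI impI)
    fix z :: complex assume zK: "K + 1 \<le> norm z"
    have far: "norm z - K \<le> norm (p - z)" if "p \<in> sphere c \<rho>" for p
    proof -
      have "norm p \<le> norm c + \<rho>" using that norm_triangle_ineq[of c "p - c"]
        by (auto simp: dist_norm norm_minus_commute)
      thus ?thesis using norm_triangle_ineq2[of z p] by (simp add: K_def norm_minus_commute)
    qed
    have nz: "p \<noteq> z" if "p \<in> sphere c \<rho>" for p using far[OF that] zK by auto
    have c1: "(\<lambda>p. f p * p / (p - z)) contour_integrable_on circlepath c \<rho>"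
      using cf r nz by (intro contour_integrable_continuous_circlepath continuous_intros) auto
    have c2: "(\<lambda>p. f p / (p - z)) contour_integrable_on circlepath c \<rho>"
      using cf r nz by (intro contour_integrable_continuous_circlepath continuous_intros) auto
    have "z * contour_integral (circlepath c \<rho>) (\<lambda>p. f p / (p - z))
          = contour_integral (circlepath c \<rho>) (\<lambda>p. z * (f p / (p - z)))"
      using contour_integral_lmul[OF c2] by simp
    also have "\<dots> = contour_integral (circlepath c \<rho>) (\<lambda>p. f p * p / (p - z) - f p)"
    proof (rule contour_integral_eq)
      fix p assume "p \<in> path_image (circlepath c \<rho>)"
      hence "p - z \<noteq> 0" using nz r by auto
      thus "z * (f p / (p - z)) = f p * p / (p - z) - f p" by (simp add: field_simps)
    qed
    also have "\<dots> = contour_integral (circlepath c \<rho>) (\<lambda>p. f p * p / (p - z)) - I"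
      unfolding I_def by (rule contour_integral_diff[OF c1 fint])
    finally have eq: "z * contour_integral (circlepath c \<rho>) (\<lambda>p. f p / (p - z)) - - I
        = contour_integral (circlepath c \<rho>) (\<lambda>p. f p * p / (p - z))" by simp
    have "norm (contour_integral (circlepath c \<rho>) (\<lambda>p. f p * p / (p - z))) \<le> (B / (norm z - K)) * (2 * pi * \<rho>)"
    proof (rule has_contour_integral_bound_circlepath[OF has_contour_integral_integral[OF c1]])
      show "0 \<le> B / (norm z - K)" using B0 zK by simp
      show "0 < \<rho>" by fact
      fix p assume "norm (p - c) = \<rho>"
      hence ps: "p \<in> sphere c \<rho>" by (simp add: dist_norm norm_minus_commute)
      have "norm (f p * p / (p - z)) = norm (f p * p) / norm (p - z)" by (simp add: norm_divide)
      also have "\<dots> \<le> B / (norm z - K)"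
        using B[OF ps] far[OF ps] zK B0 by (intro frac_le) auto
      finally show "norm (f p * p / (p - z)) \<le> B / (norm z - K)" .
    qed
    thus "norm (z * contour_integral (circlepath c \<rho>) (\<lambda>p. f p / (p - z)) - - I)
             \<le> B * (2 * pi * \<rho>) / (norm z - K)" using eq by simp
  qed
  have lim0: "((\<lambda>z::complex. B * (2 * pi * \<rho>) / (norm z - K)) \<longlongrightarrow> 0) at_infinity"
  proof (rule tendsto_divide_0[OF tendsto_const])
    have "LIM z at_infinity. (- K) + norm (z::complex) :> at_top"
      by (rule filterlim_tendsto_add_at_top[OF tendsto_const filterlim_norm_at_top])
    thus "LIM z at_infinity. norm (z::complex) - K :> at_infinity"
      by (intro filterlim_at_top_imp_at_infinity) simp
  qed
  have "((\<lambda>z. z * contour_integral (circlepath c \<rho>) (\<lambda>p. f p / (p - z)) - - I) \<longlongrightarrow> 0) at_infinity"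
    by (rule Lim_null_comparison[OF ev lim0])
  thus ?thesis unfolding I_def[symmetric] by (rule Lim_null[THEN iffD2])
qed

locale disks =
  fixes c :: "nat \<Rightarrow> complex" and r :: "nat \<Rightarrow> real" and m :: nat
  assumes r_pos: "\<And>i. i \<in> {1..m} \<Longrightarrow> r i > 0"
    and disj: "\<And>i j. i \<in> {1..m} \<Longrightarrow> j \<in> {1..m} \<Longrightarrow> i \<noteq> j \<Longrightarrow> cball (c i) (r i) \<inter> cball (c j) (r j) = {}"
begin

lemma germ_local:
  assumes "\<And>z0. z0 \<in> circles c r m \<Longrightarrow> \<exists>e>0. \<forall>w\<in>ball z0 e. g1 w = g2 w"
  shows "germ_eq c r m g1 g2"
proof -
  define U where "U = \<Union>{B. open B \<and> (\<forall>w\<in>B. g1 w = g2 w)}"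
  have "open U" unfolding U_def by auto
  moreover have "circles c r m \<subseteq> U"
  proof
    fix z0 assume "z0 \<in> circles c r m"
    then obtain e where "e > 0" "\<forall>w\<in>ball z0 e. g1 w = g2 w" using assms by blast
    thus "z0 \<in> U" unfolding U_def using \<open>e>0\<close> by (intro UnionI[of "ball z0 e"]) auto
  qed
  moreover have "\<forall>z\<in>U. g1 z = g2 z" unfolding U_def by auto
  ultimately show ?thesis unfolding germ_eq_def by blast
qed

lemma uniq_gen:
  assumes g1: "inH c r m g1" and g2: "inH c r m g2" and V: "open V" "circles c r m \<subseteq> V"
    and eq: "\<And>z. z \<in> V \<Longrightarrow> z \<in> D \<Longrightarrow> g1 z = g2 z"
    and lim: "\<And>z0 e. z0 \<in> circles c r m \<Longrightarrow> e > 0 \<Longrightarrow> \<exists>x. x \<in> D \<and> x \<noteq> z0 \<and> dist x z0 < e"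
  shows "germ_eq c r m g1 g2"
proof (rule germ_local)
  fix z0 assume z0: "z0 \<in> circles c r m"
  obtain U1 where U1: "open U1" "circles c r m \<subseteq> U1" "g1 holomorphic_on U1" using g1 unfolding inH_def by blast
  obtain U2 where U2: "open U2" "circles c r m \<subseteq> U2" "g2 holomorphic_on U2" using g2 unfolding inH_def by blast
  have "open (U1 \<inter> U2 \<inter> V)" using U1 U2 V by auto
  moreover have "z0 \<in> U1 \<inter> U2 \<inter> V" using z0 U1 U2 V by auto
  ultimately obtain e where e: "e > 0" "ball z0 e \<subseteq> U1 \<inter> U2 \<inter> V" using open_contains_ball by blast
  have hol: "(\<lambda>w. g1 w - g2 w) holomorphic_on ball z0 e"
    using e U1 U2 by (intro holomorphic_intros) (auto intro: holomorphic_on_subset)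
  have "z0 islimpt (ball z0 e \<inter> D)"
  proof (rule islimpt_approachable[THEN iffD2], intro allI impI)
    fix d :: real assume "d > 0"
    then obtain x where "x \<in> D" "x \<noteq> z0" "dist x z0 < min d e" using lim[OF z0, of "min d e"] e by auto
    thus "\<exists>x'\<in>ball z0 e \<inter> D. x' \<noteq> z0 \<and> dist x' z0 < d"
      by (intro bexI[of _ x]) (auto simp: dist_commute)
  qed
  have "\<forall>w\<in>ball z0 e. g1 w - g2 w = 0"
  proof
    fix w assume w: "w \<in> ball z0 e"
    show "g1 w - g2 w = 0"
      by (rule analytic_continuation[OF hol _ _ _ _ \<open>z0 islimpt (ball z0 e \<inter> D)\<close>])
         (use e w eq in auto)
  qed
  thus "\<exists>e>0. \<forall>w\<in>ball z0 e. g1 w = g2 w" using e by auto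
qed

lemma circlesE:
  assumes "z \<in> circles c r m"
  obtains j where "j \<in> {1..m}" "dist (c j) z = r j"
  using assms unfolding circles_def by auto

lemma lim_int:
  assumes z0: "z0 \<in> circles c r m" and e: "e > 0"
  shows "\<exists>x. x \<in> Dint c r m \<and> x \<noteq> z0 \<and> dist x z0 < e"
proof -
  obtain j where j: "j \<in> {1..m}" "dist (c j) z0 = r j" using circlesE[OF z0] by blast
  have rj: "r j > 0" using r_pos j by auto
  define t where "t = min (1/2) (e / (2 * r j))"
  have t: "0 < t" "t < 1" "t * r j < e" using rj e unfolding t_def by (auto simp: min_def field_simps)
  define x where "x = z0 + of_real t * (c j - z0)"
  have "x - c j = of_real (1 - t) * (z0 - c j)" unfolding x_def by (simp add: algebra_simps)
  hence dx: "dist (c j) x = (1 - t) * r j" using j t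
    by (simp add: dist_norm norm_mult norm_minus_commute del: of_real_diff of_real_add)
  have "x \<in> ball (c j) (r j)" using dx t rj by simp
  hence "x \<in> Dint c r m" unfolding Dint_def using j by auto
  moreover have "dist x z0 = t * r j" unfolding x_def using j t
    by (simp add: dist_norm norm_mult norm_minus_commute del: of_real_diff of_real_add)
  ultimately show ?thesis using t rj by (intro exI[of _ x]) auto
qed

lemma lim_ext:
  assumes z0: "z0 \<in> circles c r m" and e: "e > 0"
  shows "\<exists>x. x \<in> Dext c r m \<and> x \<noteq> z0 \<and> dist x z0 < e"
proof -
  obtain j where j: "j \<in> {1..m}" "dist (c j) z0 = r j" using circlesE[OF z0] by blast
  have rj: "r j > 0" using r_pos j by auto
  define W where "W = - (\<Union>s\<in>{1..m} - {j}. cball (c s) (r s))"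
  have "open W" unfolding W_def by (intro open_Compl closed_Union) auto
  moreover have "z0 \<in> W"
  proof -
    have zj: "z0 \<in> cball (c j) (r j)" using j by simp
    { fix s assume s: "s \<in> {1..m}" "s \<noteq> j" "z0 \<in> cball (c s) (r s)"
      with disj[OF j(1) s(1)] zj have False by blast }
    thus ?thesis unfolding W_def by blast
  qed
  ultimately obtain \<eta> where eta: "\<eta> > 0" "ball z0 \<eta> \<subseteq> W" using open_contains_ball by blast
  define t where "t = min (1/2) (min e \<eta> / (2 * r j))"
  have t: "0 < t" "t * r j < e" "t * r j < \<eta>" using rj e eta unfolding t_def by (auto simp: min_def field_simps)
  define x where "x = z0 + of_real t * (z0 - c j)"
  have "x - c j = of_real (1 + t) * (z0 - c j)" unfolding x_def by (simp add: algebra_simps)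
  hence dx: "dist (c j) x = (1 + t) * r j" using j t
    by (simp add: dist_norm norm_mult norm_minus_commute del: of_real_diff of_real_add)
  have dz: "dist x z0 = t * r j" unfolding x_def using j t
    by (simp add: dist_norm norm_mult norm_minus_commute del: of_real_diff of_real_add)
  have "x \<in> W" using eta dz t by (auto simp: dist_commute)
  moreover have "x \<notin> cball (c j) (r j)" using dx t rj by simp
  ultimately have "x \<in> Dext c r m" unfolding Dext_def W_def by auto
  thus ?thesis using t rj dz by (intro exI[of _ x]) auto
qed

lemma uniq_int:
  assumes "inH c r m g1" "inH c r m g2" "open V" "circles c r m \<subseteq> V"
    and "\<And>z. z \<in> V \<Longrightarrow> z \<in> Dint c r m \<Longrightarrow> g1 z = g2 z"
  shows "germ_eq c r m g1 g2"
  using uniq_gen[OF assms(1-4), of "Dint c r m"] assms(5) lim_int by blast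

lemma uniq_ext:
  assumes "inH c r m g1" "inH c r m g2" "open V" "circles c r m \<subseteq> V"
    and "\<And>z. z \<in> V \<Longrightarrow> z \<in> Dext c r m \<Longrightarrow> g1 z = g2 z"
  shows "germ_eq c r m g1 g2"
  using uniq_gen[OF assms(1-4), of "Dext c r m"] assms(5) lim_ext by blast

end

lemma cball_disj_dist:
  fixes a b :: complex
  assumes "cball a \<rho> \<inter> cball b \<sigma> = {}" "0 \<le> \<rho>" "0 \<le> \<sigma>"
  shows "\<rho> + \<sigma> < dist a b"
proof (rule ccontr)
  assume "\<not> \<rho> + \<sigma> < dist a b"
  hence le: "dist a b \<le> \<rho> + \<sigma>" by simp
  show False
  proof (cases "\<rho> + \<sigma> = 0")
    case True
    hence "a = b" "\<rho> = 0" "\<sigma> = 0" using le assms by auto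
    thus False using assms(1) by auto
  next
    case False
    hence pos: "\<rho> + \<sigma> > 0" using assms by simp
    define t where "t = \<rho> / (\<rho> + \<sigma>)"
    have t: "0 \<le> t" "t \<le> 1" "1 - t = \<sigma> / (\<rho> + \<sigma>)" using pos assms unfolding t_def by (auto simp: field_simps)
    define p where "p = a + of_real t * (b - a)"
    have "dist a p = t * dist a b" unfolding p_def dist_norm using t
      by (simp add: norm_mult norm_minus_commute)
    also have "\<dots> \<le> t * (\<rho> + \<sigma>)" using le t by (intro mult_left_mono) auto
    also have "\<dots> = \<rho>" unfolding t_def using pos by simp
    finally have 1: "p \<in> cball a \<rho>" by simp
    have eq: "p - b = of_real (1 - t) * (a - b)" unfolding p_def by (simp add: algebra_simps)
    have "dist b p = norm (of_real (1 - t) * (a - b))"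
      unfolding dist_norm norm_minus_commute[of b p] eq ..
    also have "\<dots> = (1 - t) * dist a b" unfolding norm_mult norm_of_real dist_norm using t(1,2) by simp
    finally have "dist b p = (1 - t) * dist a b" .
    also have "\<dots> \<le> (1 - t) * (\<rho> + \<sigma>)" using le t by (intro mult_left_mono) auto
    also have "\<dots> = \<sigma>" using t(3) pos by simp
    finally have 2: "p \<in> cball b \<sigma>" by simp
    from 1 2 assms(1) show False by blast
  qed
qed

lemma inv_in:
  assumes "norm (a - c) < \<rho>"
  shows "((\<lambda>p. 1 / (p - a)) has_contour_integral (2 * of_real pi * \<i>)) (circlepath c \<rho>)"
  using Cauchy_integral_circlepath_simple[of "\<lambda>_. 1" c \<rho> a] assms by simp

lemma inv_out:
  assumes "0 < \<rho>" "\<rho> < \<sigma>" "\<sigma> \<le> norm (a - c)"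
  shows "((\<lambda>p. 1 / (p - a)) has_contour_integral 0) (circlepath c \<rho>)"
proof (rule Cauchy_theorem_convex_simple[of _ "ball c \<sigma>"])
  show "(\<lambda>p. 1 / (p - a)) holomorphic_on ball c \<sigma>"
    using assms by (intro holomorphic_intros) (auto simp: dist_norm norm_minus_commute)
  show "path_image (circlepath c \<rho>) \<subseteq> ball c \<sigma>" using assms by auto
qed auto

lemma lim_z_over:
  fixes a :: complex
  shows "((\<lambda>z. z / (z - a)) \<longlongrightarrow> 1) at_infinity"
proof -
  have fl: "filterlim (\<lambda>z. - a + z) at_infinity at_infinity"
    by (rule tendsto_add_filterlim_at_infinity[OF tendsto_const filterlim_ident])
  have "((\<lambda>z. a / (z - a)) \<longlongrightarrow> 0) at_infinity"
    by (rule tendsto_divide_0[OF tendsto_const]) (use fl in simp)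
  hence "((\<lambda>z. 1 + a / (z - a)) \<longlongrightarrow> 1 + 0) at_infinity" by (intro tendsto_add) auto
  moreover have "eventually (\<lambda>z. 1 + a / (z - a) = z / (z - a)) at_infinity"
    unfolding eventually_at_infinity
  proof (intro exI allI impI)
    fix z :: complex assume "norm a + 1 \<le> norm z"
    hence "z - a \<noteq> 0" using norm_triangle_ineq2[of z a] by auto
    thus "1 + a / (z - a) = z / (z - a)" by (simp add: field_simps)
  qed
  ultimately show ?thesis by (auto intro: Lim_transform_eventually)
qed

lemma lim_zf_to_f:
  fixes F :: "complex \<Rightarrow> complex"
  assumes "((\<lambda>z. z * F z) \<longlongrightarrow> L) at_infinity"
  shows "(F \<longlongrightarrow> 0) at_infinity"
proof -
  have "((\<lambda>z. z * F z * inverse z) \<longlongrightarrow> L * 0) at_infinity"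
    by (intro tendsto_mult assms tendsto_inverse_0)
  moreover have "eventually (\<lambda>z. z * F z * inverse z = F z) at_infinity"
    unfolding eventually_at_infinity
  proof (intro exI allI impI)
    fix x :: complex assume "1 \<le> norm x"
    hence "x \<noteq> 0" by auto
    thus "x * F x * inverse x = F x" by simp
  qed
  ultimately show ?thesis by (auto intro: Lim_transform_eventually)
qed

lemma global_sum:
  fixes c :: "nat \<Rightarrow> complex" and r \<rho> :: "nat \<Rightarrow> real" and F :: "complex \<Rightarrow> complex"
  assumes "finite S"
    and "\<And>s. s \<in> S \<Longrightarrow> 0 < \<rho> s \<and> \<rho> s < r s"
    and "\<And>s t. s \<in> S \<Longrightarrow> t \<in> S \<Longrightarrow> s \<noteq> t \<Longrightarrow> cball (c s) (r s) \<inter> cball (c t) (r t) = {}"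
    and "F holomorphic_on (- (\<Union>s\<in>S. cball (c s) (\<rho> s)))"
    and "((\<lambda>z. z * F z) \<longlongrightarrow> L) at_infinity"
  shows "(\<Sum>s\<in>S. contour_integral (circlepath (c s) (r s)) F) = 2 * of_real pi * \<i> * L"
  using assms
proof (induction S arbitrary: F L rule: finite_induct)
  case empty
  have hol: "F holomorphic_on UNIV" using empty.prems by simp
  have F0: "(F \<longlongrightarrow> 0) at_infinity" by (rule lim_zf_to_f[OF empty.prems(4)])
  have "F z = 0" for z using Liouville_weak[OF hol F0] .
  hence "((\<lambda>z. z * F z) \<longlongrightarrow> 0) at_infinity" by simp
  hence "L = 0" using empty.prems(4) by (metis tendsto_unique trivial_limit_at_infinity)
  thus ?case by simp
next
  case (insert k S)
  note prems = insert.prems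
  have k: "0 < \<rho> k" "\<rho> k < r k" using prems(1) by auto
  define \<rho>' where "\<rho>' = (\<rho> k + r k) / 2"
  have rho': "\<rho> k < \<rho>'" "\<rho>' < r k" "0 < \<rho>'" using k unfolding \<rho>'_def by auto
  define \<Omega> where "\<Omega> = - (\<Union>s\<in>insert k S. cball (c s) (\<rho> s))"
  define \<Omega>' where "\<Omega>' = - (\<Union>s\<in>S. cball (c s) (\<rho> s))"
  have openO: "open \<Omega>" "open \<Omega>'" unfolding \<Omega>_def \<Omega>'_def using insert.hyps(1)
    by (auto intro!: open_Compl closed_Union)
  have dks: "r s + r k < dist (c s) (c k)" if "s \<in> S" for s
    using cball_disj_dist[OF prems(2)[of s k]] that insert.hyps(2) prems(1)[of s] prems(1)[of k] by auto
  have annO: "p \<in> \<Omega>" if "\<rho>' \<le> norm (p - c k)" "norm (p - c k) \<le> r k" for p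
  proof -
    have "p \<notin> cball (c k) (\<rho> k)" using that rho' by (auto simp: dist_norm norm_minus_commute)
    moreover have "p \<notin> cball (c s) (\<rho> s)" if s: "s \<in> S" for s
    proof
      assume "p \<in> cball (c s) (\<rho> s)"
      hence "dist (c s) p \<le> r s" using prems(1)[of s] s by auto
      moreover have "dist (c k) p \<le> r k" using \<open>norm (p - c k) \<le> r k\<close> by (simp add: dist_norm norm_minus_commute)
      ultimately have "dist (c s) (c k) \<le> r s + r k" using dist_triangle[of "c s" "c k" p] by (simp add: dist_commute)
      thus False using dks[OF s] by simp
    qed
    ultimately show ?thesis unfolding \<Omega>_def by auto
  qed
  have hol: "F holomorphic_on \<Omega>" using prems(3) unfolding \<Omega>_def .
  have sphO: "sphere (c k) \<rho>' \<subseteq> \<Omega>" "sphere (c k) (r k) \<subseteq> \<Omega>"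
    using annO rho' by (auto simp: dist_norm norm_minus_commute)
  have contF: "continuous_on (sphere (c k) \<rho>') F" "continuous_on (sphere (c k) (r k)) F"
    using sphO hol by (auto intro: holomorphic_on_imp_continuous_on holomorphic_on_subset)
  define Fo where "Fo = (\<lambda>z. - (1 / (2 * of_real pi * \<i>)) * contour_integral (circlepath (c k) \<rho>') (\<lambda>p. F p / (p - z)))"
  define Fi where "Fi = (\<lambda>z. (1 / (2 * of_real pi * \<i>)) * contour_integral (circlepath (c k) (r k)) (\<lambda>p. F p / (p - z)))"
  define Lo where "Lo = (1 / (2 * of_real pi * \<i>)) * contour_integral (circlepath (c k) \<rho>') F"
  define G where "G = (\<lambda>z. if z \<in> ball (c k) (r k) then Fi z else F z - Fo z)"
  define O2 where "O2 = \<Omega>' \<inter> - cball (c k) \<rho>'"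
  have openO2: "open O2" unfolding O2_def using openO by auto
  have Fo_hol: "Fo holomorphic_on (- sphere (c k) \<rho>')"
    using cauchy_hol_circ[of "c k" \<rho>' F] contF rho' unfolding Fo_def
    by (intro holomorphic_intros) auto
  have Fi_hol: "Fi holomorphic_on ball (c k) (r k)"
    using cauchy_hol_circ[of "c k" "r k" F] contF k unfolding Fi_def
    by (intro holomorphic_intros) (auto intro: holomorphic_on_subset)
  have O2O: "O2 \<subseteq> \<Omega>" unfolding O2_def \<Omega>'_def \<Omega>_def using rho' by auto
  have O2s: "O2 \<subseteq> - sphere (c k) \<rho>'" unfolding O2_def by auto
  have FFo_hol: "(\<lambda>z. F z - Fo z) holomorphic_on O2"
    using hol Fo_hol O2O O2s by (intro holomorphic_intros) (auto intro: holomorphic_on_subset)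
  have agree: "Fi z = F z - Fo z" if "z \<in> ball (c k) (r k)" "z \<in> O2" for z
  proof -
    have z1: "\<rho>' < norm (z - c k)" "norm (z - c k) < r k"
      using that unfolding O2_def by (auto simp: dist_norm norm_minus_commute)
    have "contour_integral (circlepath (c k) (r k)) (\<lambda>p. F p / (p - z)) - contour_integral (circlepath (c k) \<rho>') (\<lambda>p. F p / (p - z))
          = 2 * of_real pi * \<i> * F z"
      by (rule annulus_cauchy[OF rho'(3) z1 openO(1) hol annO])
    thus ?thesis unfolding Fi_def Fo_def by (simp add: field_simps)
  qed
  have G_hol0: "G holomorphic_on (ball (c k) (r k) \<union> O2)"
    unfolding G_def using Fi_hol FFo_hol openO2 agree by (intro holomorphic_on_If_Un) auto
  have cover: "\<Omega>' \<subseteq> ball (c k) (r k) \<union> O2" unfolding O2_def using rho' by auto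
  have G_hol: "G holomorphic_on (- (\<Union>s\<in>S. cball (c s) (\<rho> s)))"
    using holomorphic_on_subset[OF G_hol0 cover] unfolding \<Omega>'_def .
  have limFo: "((\<lambda>z. z * Fo z) \<longlongrightarrow> Lo) at_infinity"
  proof -
    have "((\<lambda>z. - (1 / (2 * of_real pi * \<i>)) * (z * contour_integral (circlepath (c k) \<rho>') (\<lambda>p. F p / (p - z))))
          \<longlongrightarrow> - (1 / (2 * of_real pi * \<i>)) * (- contour_integral (circlepath (c k) \<rho>') F)) at_infinity"
      by (intro tendsto_mult_left cauchy_limit rho' contF)
    thus ?thesis unfolding Fo_def Lo_def by (simp add: algebra_simps)
  qed
  have limG: "((\<lambda>z. z * G z) \<longlongrightarrow> L - Lo) at_infinity"
  proof -
    have "((\<lambda>z. z * F z - z * Fo z) \<longlongrightarrow> L - Lo) at_infinity"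
      by (intro tendsto_diff prems(4) limFo)
    moreover have "eventually (\<lambda>z. z * F z - z * Fo z = z * G z) at_infinity"
      unfolding eventually_at_infinity
    proof (intro exI allI impI)
      fix z :: complex assume "norm (c k) + r k + 1 \<le> norm z"
      hence "z \<notin> ball (c k) (r k)" using norm_triangle_ineq2[of z "c k"]
        by (auto simp: dist_norm norm_minus_commute)
      thus "z * F z - z * Fo z = z * G z" unfolding G_def by (simp add: algebra_simps)
    qed
    ultimately show ?thesis by (rule Lim_transform_eventually)
  qed
  have IH: "(\<Sum>s\<in>S. contour_integral (circlepath (c s) (r s)) G) = 2 * of_real pi * \<i> * (L - Lo)"
    by (rule insert.IH) (use prems(1,2) G_hol limG in auto)
  have each: "contour_integral (circlepath (c s) (r s)) G = contour_integral (circlepath (c s) (r s)) F" if s: "s \<in> S" for s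
  proof -
    have d: "r s + r k < dist (c s) (c k)" using dks[OF s] .
    have rs: "0 < \<rho> s" "\<rho> s < r s" using prems(1)[of s] s by auto
    have notball: "p \<notin> ball (c k) (r k)" if "p \<in> sphere (c s) (r s)" for p
      using that d dist_triangle[of "c s" "c k" p] by (auto simp: dist_commute)
    have pO: "sphere (c s) (r s) \<subseteq> \<Omega>"
    proof
      fix p assume p: "p \<in> sphere (c s) (r s)"
      have "p \<notin> cball (c t) (\<rho> t)" if t: "t \<in> insert k S" for t
      proof (cases "t = s")
        case True thus ?thesis using p rs by auto
      next
        case False
        show ?thesis
        proof (cases "t = k")
          case True
          have "dist (c s) (c k) \<le> dist (c s) p + dist (c k) p" using dist_triangle[of "c s" "c k" p] by (simp add: dist_commute)
          thus ?thesis using True p d k by auto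
        next
          case False
          hence tS: "t \<in> S" using t by auto
          have "p \<in> cball (c s) (r s)" using p by auto
          moreover have "cball (c t) (\<rho> t) \<subseteq> cball (c t) (r t)" using prems(1)[of t] tS by auto
          ultimately show ?thesis using prems(2)[of s t] s tS \<open>t \<noteq> s\<close> by blast
        qed
      qed
      thus "p \<in> \<Omega>" unfolding \<Omega>_def by blast
    qed
    have pO2: "sphere (c s) (r s) \<subseteq> - sphere (c k) \<rho>'"
    proof
      fix p assume p: "p \<in> sphere (c s) (r s)"
      have "dist (c s) (c k) \<le> dist (c s) p + dist (c k) p" using dist_triangle[of "c s" "c k" p] by (simp add: dist_commute)
      thus "p \<in> - sphere (c k) \<rho>'" using p d rho' by auto
    qed
    have iF: "F contour_integrable_on circlepath (c s) (r s)"
      using rs pO by (intro contour_integrable_holomorphic_simple[OF hol openO(1)]) auto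
    have iFo: "Fo contour_integrable_on circlepath (c s) (r s)"
      using rs pO2 by (intro contour_integrable_holomorphic_simple[OF Fo_hol]) auto
    have "contour_integral (circlepath (c s) (r s)) G = contour_integral (circlepath (c s) (r s)) (\<lambda>z. F z - Fo z)"
      using notball rs unfolding G_def by (intro contour_integral_eq) auto
    also have "\<dots> = contour_integral (circlepath (c s) (r s)) F - contour_integral (circlepath (c s) (r s)) Fo"
      by (rule contour_integral_diff[OF iF iFo])
    also have "contour_integral (circlepath (c s) (r s)) Fo = 0"
    proof (rule contour_integral_unique[OF Cauchy_theorem_convex_simple[of _ "ball (c s) (dist (c s) (c k) - \<rho>')"]])
      show "Fo holomorphic_on ball (c s) (dist (c s) (c k) - \<rho>')"
      proof (rule holomorphic_on_subset[OF Fo_hol])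
        show "ball (c s) (dist (c s) (c k) - \<rho>') \<subseteq> - sphere (c k) \<rho>'"
        proof
          fix p assume "p \<in> ball (c s) (dist (c s) (c k) - \<rho>')"
          moreover have "dist (c s) (c k) \<le> dist (c s) p + dist (c k) p" using dist_triangle[of "c s" "c k" p] by (simp add: dist_commute)
          ultimately show "p \<in> - sphere (c k) \<rho>'" by auto
        qed
      qed
      show "path_image (circlepath (c s) (r s)) \<subseteq> ball (c s) (dist (c s) (c k) - \<rho>')"
        using rs d rho' by auto
    qed auto
    finally show ?thesis by simp
  qed
  have kk: "contour_integral (circlepath (c k) (r k)) F = 2 * of_real pi * \<i> * Lo"
  proof -
    have "contour_integral (circlepath (c k) \<rho>') F = contour_integral (circlepath (c k) (r k)) F"
      by (rule annulus_eq[OF rho'(3) _ openO(1) hol annO]) (use rho' in auto)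
    thus ?thesis unfolding Lo_def by simp
  qed
  have "(\<Sum>s\<in>insert k S. contour_integral (circlepath (c s) (r s)) F)
        = contour_integral (circlepath (c k) (r k)) F + (\<Sum>s\<in>S. contour_integral (circlepath (c s) (r s)) F)"
    using insert.hyps by simp
  also have "(\<Sum>s\<in>S. contour_integral (circlepath (c s) (r s)) F) = (\<Sum>s\<in>S. contour_integral (circlepath (c s) (r s)) G)"
    using each by simp
  finally show ?case using IH kk by (simp add: algebra_simps)
qed

lemma finite_pos_min:
  assumes "finite A" "\<And>x. x \<in> A \<Longrightarrow> 0 < (f x :: real)"
  shows "\<exists>d>0. \<forall>x\<in>A. d \<le> f x"
  using assms
proof (induction A rule: finite_induct)
  case empty thus ?case by (intro exI[of _ 1]) auto
next
  case (insert a A)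
  then obtain d where "d > 0" "\<forall>x\<in>A. d \<le> f x" by auto
  thus ?case using insert.prems[of a] by (intro exI[of _ "min d (f a)"]) auto
qed

lemma germ_eq_refl: "germ_eq c r m f f"
  unfolding germ_eq_def by (intro exI[of _ UNIV]) auto

lemma germ_eq_sym: "germ_eq c r m f g \<Longrightarrow> germ_eq c r m g f"
  unfolding germ_eq_def by metis

lemma germ_eq_trans: "germ_eq c r m f g \<Longrightarrow> germ_eq c r m g h \<Longrightarrow> germ_eq c r m f h"
  unfolding germ_eq_def
proof (elim exE conjE)
  fix U V assume "open U" "circles c r m \<subseteq> U" "\<forall>z\<in>U. f z = g z" "open V" "circles c r m \<subseteq> V" "\<forall>z\<in>V. g z = h z"
  thus "\<exists>U. open U \<and> circles c r m \<subseteq> U \<and> (\<forall>z\<in>U. f z = h z)"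
    by (intro exI[of _ "U \<inter> V"]) auto
qed

lemma germ_eq_binop:
  assumes "germ_eq c r m f1 g1" "germ_eq c r m f2 g2"
  shows "germ_eq c r m (\<lambda>z. H (f1 z) (f2 z) z) (\<lambda>z. H (g1 z) (g2 z) z)"
proof -
  obtain U V where "open U" "circles c r m \<subseteq> U" "\<forall>z\<in>U. f1 z = g1 z" "open V" "circles c r m \<subseteq> V" "\<forall>z\<in>V. f2 z = g2 z"
    using assms unfolding germ_eq_def by blast
  thus ?thesis unfolding germ_eq_def by (intro exI[of _ "U \<inter> V"]) auto
qed

lemma germ_eq_unop:
  assumes "germ_eq c r m f1 g1"
  shows "germ_eq c r m (\<lambda>z. H (f1 z) z) (\<lambda>z. H (g1 z) z)"
  using germ_eq_binop[OF assms assms, of "\<lambda>a b z. H a z"] by simp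

lemma germ_eqI: "open V \<Longrightarrow> circles c r m \<subseteq> V \<Longrightarrow> (\<And>z. z \<in> V \<Longrightarrow> f z = g z) \<Longrightarrow> germ_eq c r m f g"
  unfolding germ_eq_def by blast

context disks begin

definition good :: "complex set \<Rightarrow> real \<Rightarrow> bool" where
  "good U \<delta> \<longleftrightarrow> \<delta> > 0 \<and> (\<forall>s\<in>{1..m}. 2 * \<delta> < r s)
     \<and> (\<forall>s\<in>{1..m}. \<forall>p. r s - 2 * \<delta> \<le> norm (p - c s) \<and> norm (p - c s) \<le> r s + 2 * \<delta> \<longrightarrow> p \<in> U)
     \<and> (\<forall>s\<in>{1..m}. \<forall>t\<in>{1..m}. s \<noteq> t \<longrightarrow> r s + r t + 4 * \<delta> < dist (c s) (c t))"

lemma compact_circles: "compact (circles c r m)"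
  unfolding circles_def by (intro compact_UN) auto

lemma good_exists:
  assumes "open U" "circles c r m \<subseteq> U"
  shows "\<exists>\<delta>. good U \<delta>"
proof -
  obtain \<epsilon> where eps: "\<epsilon> > 0" "(\<Union>x\<in>circles c r m. ball x \<epsilon>) \<subseteq> U"
    using compact_subset_open_imp_ball_epsilon_subset[OF compact_circles assms(1,2)] by blast
  obtain d1 where d1: "d1 > 0" "\<forall>x\<in>{(s,t). s \<in> {1..m} \<and> t \<in> {1..m} \<and> s \<noteq> t}. d1 \<le> dist (c (fst x)) (c (snd x)) - r (fst x) - r (snd x)"
  proof -
    have "finite {(s,t). s \<in> {1..m} \<and> t \<in> {1..m} \<and> s \<noteq> t}"
      by (rule finite_subset[of _ "{1..m} \<times> {1..m}"]) auto
    moreover have "0 < dist (c (fst x)) (c (snd x)) - r (fst x) - r (snd x)"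
      if "x \<in> {(s,t). s \<in> {1..m} \<and> t \<in> {1..m} \<and> s \<noteq> t}" for x
      using that cball_disj_dist[OF disj, of "fst x" "snd x"] r_pos[of "fst x"] r_pos[of "snd x"] by auto
    ultimately obtain d where "d > 0" "\<forall>x\<in>{(s,t). s \<in> {1..m} \<and> t \<in> {1..m} \<and> s \<noteq> t}. d \<le> dist (c (fst x)) (c (snd x)) - r (fst x) - r (snd x)"
      using finite_pos_min[of "{(s,t). s \<in> {1..m} \<and> t \<in> {1..m} \<and> s \<noteq> t}" "\<lambda>x. dist (c (fst x)) (c (snd x)) - r (fst x) - r (snd x)"] by blast
    thus ?thesis using that by blast
  qed
  obtain d2 where d2: "d2 > 0" "\<forall>s\<in>{1..m}. d2 \<le> r s"
    using finite_pos_min[of "{1..m}" r] r_pos by auto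
  define \<delta> where "\<delta> = min (\<epsilon> / 4) (min (d1 / 8) (d2 / 8))"
  have dpos: "\<delta> > 0" unfolding \<delta>_def using eps d1 d2 by auto
  have "good U \<delta>" unfolding good_def
  proof (intro conjI ballI allI impI)
    show "\<delta> > 0" by fact
  next
    fix s assume "s \<in> {1..m}" thus "2 * \<delta> < r s" using d2 dpos unfolding \<delta>_def by fastforce
  next
    fix s t assume st: "s \<in> {1..m}" "t \<in> {1..m}" "s \<noteq> t"
    hence "d1 \<le> dist (c s) (c t) - r s - r t" using d1 by auto
    thus "r s + r t + 4 * \<delta> < dist (c s) (c t)" using d1 unfolding \<delta>_def by linarith
  next
    fix s p assume s: "s \<in> {1..m}" and p: "r s - 2 * \<delta> \<le> norm (p - c s) \<and> norm (p - c s) \<le> r s + 2 * \<delta>"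
    have rs: "2 * \<delta> < r s" using d2 s dpos unfolding \<delta>_def by fastforce
    define n where "n = norm (p - c s)"
    have npos: "n > 0" using p rs unfolding n_def by linarith
    define q where "q = c s + of_real (r s / n) * (p - c s)"
    have "q - c s = of_real (r s / n) * (p - c s)" unfolding q_def by simp
    hence "dist (c s) q = r s" using npos r_pos[OF s]
      by (simp add: dist_norm norm_mult norm_minus_commute n_def[symmetric] del: of_real_divide)
    hence qc: "q \<in> circles c r m" unfolding circles_def using s by auto
    have "p - q = of_real (1 - r s / n) * (p - c s)" unfolding q_def by (simp add: algebra_simps)
    hence "dist p q = \<bar>1 - r s / n\<bar> * n"
      by (simp add: dist_norm norm_mult n_def[symmetric] del: of_real_diff of_real_divide)
    also have "\<dots> = \<bar>(1 - r s / n) * n\<bar>" using npos by (simp add: abs_mult)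
    also have "(1 - r s / n) * n = n - r s" using npos by (simp add: field_simps)
    also have "\<bar>n - r s\<bar> \<le> 2 * \<delta>" using p unfolding n_def abs_le_iff by linarith
    also have "2 * \<delta> < \<epsilon>" using eps unfolding \<delta>_def by linarith
    finally have "p \<in> ball q \<epsilon>" by (simp add: dist_commute)
    thus "p \<in> U" using eps qc by blast
  qed
  thus ?thesis by blast
qed

lemma good_mono: "good U \<delta> \<Longrightarrow> 0 < \<delta>' \<Longrightarrow> \<delta>' \<le> \<delta> \<Longrightarrow> U \<subseteq> U' \<Longrightarrow> good U' \<delta>'"
  unfolding good_def
proof (elim conjE, intro conjI ballI allI impI)
  assume a: "\<forall>s\<in>{1..m}. 2 * \<delta> < r s" "\<forall>s\<in>{1..m}. \<forall>p. r s - 2 * \<delta> \<le> cmod (p - c s) \<and> cmod (p - c s) \<le> r s + 2 * \<delta> \<longrightarrow> p \<in> U"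
    "\<forall>s\<in>{1..m}. \<forall>t\<in>{1..m}. s \<noteq> t \<longrightarrow> r s + r t + 4 * \<delta> < dist (c s) (c t)" "0 < \<delta>'" "\<delta>' \<le> \<delta>" "U \<subseteq> U'"
  show "0 < \<delta>'" by fact
  fix s assume s: "s \<in> {1..m}"
  show "2 * \<delta>' < r s" using a(1) s a(5) by fastforce
  { fix p assume "r s - 2 * \<delta>' \<le> cmod (p - c s) \<and> cmod (p - c s) \<le> r s + 2 * \<delta>'"
    hence "r s - 2 * \<delta> \<le> cmod (p - c s) \<and> cmod (p - c s) \<le> r s + 2 * \<delta>" using a(5) by linarith
    thus "p \<in> U'" using a(2) s a(6) by blast }
  { fix t assume "t \<in> {1..m}" "s \<noteq> t"
    thus "r s + r t + 4 * \<delta>' < dist (c s) (c t)" using a(3) s a(5) by fastforce }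
qed

end

context disks begin

definition Pw :: "(complex \<Rightarrow> complex) \<Rightarrow> real \<Rightarrow> complex \<Rightarrow> complex" where
  "Pw f \<delta> z = (1 / (2 * of_real pi * \<i>)) * (\<Sum>s=1..m. contour_integral (circlepath (c s) (r s + \<delta>)) (\<lambda>p. f p / (p - z)))"

definition Mw :: "(complex \<Rightarrow> complex) \<Rightarrow> real \<Rightarrow> complex \<Rightarrow> complex" where
  "Mw f \<delta> z = - (1 / (2 * of_real pi * \<i>)) * (\<Sum>s=1..m. contour_integral (circlepath (c s) (r s - \<delta>)) (\<lambda>p. f p / (p - z)))"

definition Ann :: "real \<Rightarrow> complex set" where
  "Ann \<delta> = (\<Union>s\<in>{1..m}. {z. r s - \<delta> < norm (z - c s) \<and> norm (z - c s) < r s + \<delta>})"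

definition SP :: "real \<Rightarrow> complex set" where
  "SP \<delta> = - (\<Union>s\<in>{1..m}. sphere (c s) (r s + \<delta>))"

definition SM :: "real \<Rightarrow> complex set" where
  "SM \<delta> = - (\<Union>s\<in>{1..m}. sphere (c s) (r s - \<delta>))"

lemma open_Ann: "open (Ann \<delta>)"
  unfolding Ann_def by (intro open_UN ballI open_Collect_conj open_Collect_less continuous_intros)

lemma open_SP: "open (SP \<delta>)" unfolding SP_def by (intro open_Compl closed_UN) auto
lemma open_SM: "open (SM \<delta>)" unfolding SM_def by (intro open_Compl closed_UN) auto

lemma circles_Ann: "\<delta> > 0 \<Longrightarrow> circles c r m \<subseteq> Ann \<delta>"
  unfolding circles_def Ann_def by (auto simp: dist_norm norm_minus_commute)

lemma good_pos: "good U \<delta> \<Longrightarrow> \<delta> > 0" unfolding good_def by auto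
lemma good_r: "good U \<delta> \<Longrightarrow> s \<in> {1..m} \<Longrightarrow> 2 * \<delta> < r s" unfolding good_def by auto
lemma good_U: "good U \<delta> \<Longrightarrow> s \<in> {1..m} \<Longrightarrow> r s - 2 * \<delta> \<le> norm (p - c s) \<Longrightarrow> norm (p - c s) \<le> r s + 2 * \<delta> \<Longrightarrow> p \<in> U"
  unfolding good_def by auto
lemma good_gap: "good U \<delta> \<Longrightarrow> s \<in> {1..m} \<Longrightarrow> t \<in> {1..m} \<Longrightarrow> s \<noteq> t \<Longrightarrow> r s + r t + 4 * \<delta> < dist (c s) (c t)"
  unfolding good_def by auto

lemma good_circles: "good U \<delta> \<Longrightarrow> circles c r m \<subseteq> U"
  unfolding circles_def using good_U good_pos by (fastforce simp: dist_norm norm_minus_commute)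

lemma far:
  assumes "good U \<delta>" "s \<in> {1..m}" "j \<in> {1..m}" "s \<noteq> j" "norm (z - c j) < r j + e"
  shows "r s + 4 * \<delta> - e < norm (z - c s)"
proof -
  have "dist (c s) (c j) \<le> norm (z - c s) + norm (z - c j)"
    using dist_triangle[of "c s" "c j" z] by (simp add: dist_norm norm_minus_commute)
  thus ?thesis using good_gap[OF assms(1-4)] assms(5) by linarith
qed

lemma circles_SP: "good U \<delta> \<Longrightarrow> circles c r m \<subseteq> SP \<delta>"
proof
  fix z assume g: "good U \<delta>" and z: "z \<in> circles c r m"
  then obtain j where j: "j \<in> {1..m}" "dist (c j) z = r j" using circlesE by blast
  have "z \<notin> sphere (c s) (r s + \<delta>)" if s: "s \<in> {1..m}" for s
  proof (cases "s = j")
    case True thus ?thesis using j good_pos[OF g] by auto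
  next
    case False
    have "r s + 4 * \<delta> - 1 * \<delta> < norm (z - c s)"
      using far[OF g s j(1) False, of z \<delta>] j good_pos[OF g] by (simp add: dist_norm norm_minus_commute)
    thus ?thesis using good_pos[OF g] by (simp add: dist_norm norm_minus_commute)
  qed
  thus "z \<in> SP \<delta>" unfolding SP_def by auto
qed

lemma circles_SM: "good U \<delta> \<Longrightarrow> circles c r m \<subseteq> SM \<delta>"
proof
  fix z assume g: "good U \<delta>" and z: "z \<in> circles c r m"
  then obtain j where j: "j \<in> {1..m}" "dist (c j) z = r j" using circlesE by blast
  have "z \<notin> sphere (c s) (r s - \<delta>)" if s: "s \<in> {1..m}" for s
  proof (cases "s = j")
    case True thus ?thesis using j good_pos[OF g] by auto
  next
    case False
    have "r s + 4 * \<delta> - 1 * \<delta> < norm (z - c s)"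
      using far[OF g s j(1) False, of z \<delta>] j good_pos[OF g] by (simp add: dist_norm norm_minus_commute)
    thus ?thesis using good_pos[OF g] by (simp add: dist_norm norm_minus_commute)
  qed
  thus "z \<in> SM \<delta>" unfolding SM_def by auto
qed

lemma Pw_hol:
  assumes "open U" "f holomorphic_on U" "good U \<delta>"
  shows "Pw f \<delta> holomorphic_on SP \<delta>"
proof -
  have "(\<lambda>z. contour_integral (circlepath (c s) (r s + \<delta>)) (\<lambda>p. f p / (p - z))) holomorphic_on SP \<delta>"
    if s: "s \<in> {1..m}" for s
  proof -
    have rs: "0 < r s + \<delta>" using r_pos[OF s] good_pos[OF assms(3)] by simp
    have "sphere (c s) (r s + \<delta>) \<subseteq> U"
      using good_U[OF assms(3) s] good_pos[OF assms(3)] by (auto simp: dist_norm norm_minus_commute)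
    hence "continuous_on (sphere (c s) \<bar>r s + \<delta>\<bar>) f"
      using rs assms(2) by (auto intro: holomorphic_on_imp_continuous_on holomorphic_on_subset)
    from cauchy_hol_circ[OF this] show ?thesis
      by (rule holomorphic_on_subset) (use s rs in \<open>auto simp: SP_def\<close>)
  qed
  thus ?thesis unfolding Pw_def by (intro holomorphic_intros) auto
qed

lemma Mw_hol:
  assumes "open U" "f holomorphic_on U" "good U \<delta>"
  shows "Mw f \<delta> holomorphic_on SM \<delta>"
proof -
  have "(\<lambda>z. contour_integral (circlepath (c s) (r s - \<delta>)) (\<lambda>p. f p / (p - z))) holomorphic_on SM \<delta>"
    if s: "s \<in> {1..m}" for s
  proof -
    have rs: "0 < r s - \<delta>" using good_r[OF assms(3) s] good_pos[OF assms(3)] by simp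
    have "sphere (c s) (r s - \<delta>) \<subseteq> U"
      using good_U[OF assms(3) s] good_pos[OF assms(3)] by (auto simp: dist_norm norm_minus_commute)
    hence "continuous_on (sphere (c s) \<bar>r s - \<delta>\<bar>) f"
      using rs assms(2) by (auto intro: holomorphic_on_imp_continuous_on holomorphic_on_subset)
    from cauchy_hol_circ[OF this] show ?thesis
      by (rule holomorphic_on_subset) (use s rs in \<open>auto simp: SM_def\<close>)
  qed
  thus ?thesis unfolding Mw_def by (intro holomorphic_intros) auto
qed

lemma term_eq:
  assumes "open U" "f holomorphic_on U" "good U \<delta>" "s \<in> {1..m}"
    and "r s - 2 * \<delta> \<le> a" "a \<le> b" "b \<le> r s + 2 * \<delta>" "0 < a"
    and "\<not> (a \<le> norm (z - c s) \<and> norm (z - c s) \<le> b)"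
  shows "contour_integral (circlepath (c s) a) (\<lambda>p. f p / (p - z)) = contour_integral (circlepath (c s) b) (\<lambda>p. f p / (p - z))"
proof (rule annulus_eq[of a b "U - {z}"])
  show "open (U - {z})" using assms(1) by auto
  show "(\<lambda>p. f p / (p - z)) holomorphic_on U - {z}"
    using assms(2) by (intro holomorphic_intros) (auto intro: holomorphic_on_subset)
  fix p assume "a \<le> norm (p - c s)" "norm (p - c s) \<le> b"
  thus "p \<in> U - {z}" using assms good_U[OF assms(3,4), of p] by auto
qed (use assms in auto)

lemma Pw_int:
  assumes "open U" "f holomorphic_on U" "good U \<delta>" "z \<in> Dint c r m"
  shows "Pw f \<delta> z = cauchy_sum c r m f z"
proof -
  obtain j where j: "j \<in> {1..m}" "norm (z - c j) < r j" using assms(4) unfolding Dint_def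
    by (auto simp: dist_norm norm_minus_commute)
  have "contour_integral (circlepath (c s) (r s + \<delta>)) (\<lambda>p. f p / (p - z)) = contour_integral (circlepath (c s) (r s)) (\<lambda>p. f p / (p - z))"
    if s: "s \<in> {1..m}" for s
  proof -
    have "\<not> (r s \<le> norm (z - c s) \<and> norm (z - c s) \<le> r s + \<delta>)"
    proof (cases "s = j")
      case True thus ?thesis using j by auto
    next
      case False
      have "r s + 4 * \<delta> - 0 < norm (z - c s)" using far[OF assms(3) s j(1) False, of z 0] j by simp
      thus ?thesis using good_pos[OF assms(3)] by auto
    qed
    thus ?thesis using term_eq[OF assms(1-3) s, of "r s" "r s + \<delta>" z] good_pos[OF assms(3)] r_pos[OF s] by auto
  qed
  thus ?thesis unfolding Pw_def cauchy_sum_def by simp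
qed

lemma Mw_ext:
  assumes "open U" "f holomorphic_on U" "good U \<delta>" "z \<in> Dext c r m"
  shows "Mw f \<delta> z = - cauchy_sum c r m f z"
proof -
  have "contour_integral (circlepath (c s) (r s - \<delta>)) (\<lambda>p. f p / (p - z)) = contour_integral (circlepath (c s) (r s)) (\<lambda>p. f p / (p - z))"
    if s: "s \<in> {1..m}" for s
  proof -
    have "z \<notin> cball (c s) (r s)" using assms(4) s unfolding Dext_def by blast
    hence "r s < norm (z - c s)" by (simp add: dist_norm norm_minus_commute)
    thus ?thesis using term_eq[OF assms(1-3) s, of "r s - \<delta>" "r s" z] good_pos[OF assms(3)] good_r[OF assms(3) s] by auto
  qed
  thus ?thesis unfolding Mw_def cauchy_sum_def by simp
qed

lemma PM_sum:
  assumes "open U" "f holomorphic_on U" "good U \<delta>" "z \<in> Ann \<delta>"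
  shows "Pw f \<delta> z + Mw f \<delta> z = f z"
proof -
  obtain j where j: "j \<in> {1..m}" "r j - \<delta> < norm (z - c j)" "norm (z - c j) < r j + \<delta>"
    using assms(4) unfolding Ann_def by auto
  have dp: "\<delta> > 0" using good_pos[OF assms(3)] .
  have each: "contour_integral (circlepath (c s) (r s + \<delta>)) (\<lambda>p. f p / (p - z)) - contour_integral (circlepath (c s) (r s - \<delta>)) (\<lambda>p. f p / (p - z))
      = (if s = j then 2 * of_real pi * \<i> * f z else 0)" if s: "s \<in> {1..m}" for s
  proof (cases "s = j")
    case True
    have "contour_integral (circlepath (c j) (r j + \<delta>)) (\<lambda>p. f p / (p - z)) - contour_integral (circlepath (c j) (r j - \<delta>)) (\<lambda>p. f p / (p - z))
          = 2 * of_real pi * \<i> * f z"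
    proof (rule annulus_cauchy[OF _ j(2,3) assms(1,2)])
      show "0 < r j - \<delta>" using good_r[OF assms(3) j(1)] dp by simp
      fix p assume "r j - \<delta> \<le> norm (p - c j)" "norm (p - c j) \<le> r j + \<delta>"
      thus "p \<in> U" using good_U[OF assms(3) j(1), of p] dp by auto
    qed
    thus ?thesis using True by simp
  next
    case False
    have "r s + 4 * \<delta> - \<delta> < norm (z - c s)" using far[OF assms(3) s j(1) False, of z \<delta>] j by simp
    hence "\<not> (r s - \<delta> \<le> norm (z - c s) \<and> norm (z - c s) \<le> r s + \<delta>)" using dp by auto
    thus ?thesis using term_eq[OF assms(1-3) s, of "r s - \<delta>" "r s + \<delta>" z] dp good_r[OF assms(3) s] False by auto
  qed
  have "Pw f \<delta> z + Mw f \<delta> z = (1 / (2 * of_real pi * \<i>)) * (\<Sum>s=1..m. contour_integral (circlepath (c s) (r s + \<delta>)) (\<lambda>p. f p / (p - z)) - contour_integral (circlepath (c s) (r s - \<delta>)) (\<lambda>p. f p / (p - z)))"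
    unfolding Pw_def Mw_def sum_subtractf by (simp add: algebra_simps)
  also have "\<dots> = (1 / (2 * of_real pi * \<i>)) * (\<Sum>s=1..m. (if s = j then 2 * of_real pi * \<i> * f z else 0))"
    using each by simp
  also have "\<dots> = f z" using j(1) by simp
  finally show ?thesis .
qed

lemma inH_Pw: "open U \<Longrightarrow> f holomorphic_on U \<Longrightarrow> good U \<delta> \<Longrightarrow> inH c r m (Pw f \<delta>)"
  unfolding inH_def by (intro exI[of _ "SP \<delta>"] conjI open_SP circles_SP Pw_hol)

lemma inH_Mw: "open U \<Longrightarrow> f holomorphic_on U \<Longrightarrow> good U \<delta> \<Longrightarrow> inH c r m (Mw f \<delta>)"
  unfolding inH_def by (intro exI[of _ "SM \<delta>"] conjI open_SM circles_SM Mw_hol)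

lemma P_spec:
  assumes "inH c r m f"
  shows "inH c r m (plus_part c r m f) \<and> (\<exists>V. open V \<and> circles c r m \<subseteq> V \<and> (\<forall>z\<in>V \<inter> Dint c r m. plus_part c r m f z = cauchy_sum c r m f z))"
proof -
  obtain U where U: "open U" "circles c r m \<subseteq> U" "f holomorphic_on U" using assms unfolding inH_def by blast
  obtain \<delta> where g: "good U \<delta>" using good_exists[OF U(1,2)] by blast
  have ex: "\<exists>g. inH c r m g \<and> (\<exists>V. open V \<and> circles c r m \<subseteq> V \<and> (\<forall>z\<in>V \<inter> Dint c r m. g z = cauchy_sum c r m f z))"
    apply (rule exI[of _ "Pw f \<delta>"])
    using inH_Pw[OF U(1,3) g] Pw_int[OF U(1,3) g] by (intro conjI exI[of _ UNIV]) auto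
  show ?thesis unfolding plus_part_def by (rule someI_ex[OF ex])
qed

lemma M_spec:
  assumes "inH c r m f"
  shows "inH c r m (minus_part c r m f) \<and> (\<exists>V. open V \<and> circles c r m \<subseteq> V \<and> (\<forall>z\<in>V \<inter> Dext c r m. minus_part c r m f z = - cauchy_sum c r m f z))"
proof -
  obtain U where U: "open U" "circles c r m \<subseteq> U" "f holomorphic_on U" using assms unfolding inH_def by blast
  obtain \<delta> where g: "good U \<delta>" using good_exists[OF U(1,2)] by blast
  have ex: "\<exists>g. inH c r m g \<and> (\<exists>V. open V \<and> circles c r m \<subseteq> V \<and> (\<forall>z\<in>V \<inter> Dext c r m. g z = - cauchy_sum c r m f z))"
    apply (rule exI[of _ "Mw f \<delta>"])
    using inH_Mw[OF U(1,3) g] Mw_ext[OF U(1,3) g] by (intro conjI exI[of _ UNIV]) auto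
  show ?thesis unfolding minus_part_def by (rule someI_ex[OF ex])
qed

lemma P_germ:
  assumes "open U" "f holomorphic_on U" "good U \<delta>"
  shows "germ_eq c r m (plus_part c r m f) (Pw f \<delta>)"
proof -
  have fH: "inH c r m f" unfolding inH_def using assms good_circles by blast
  obtain V where V: "open V" "circles c r m \<subseteq> V" "\<forall>z\<in>V \<inter> Dint c r m. plus_part c r m f z = cauchy_sum c r m f z"
    using P_spec[OF fH] by blast
  show ?thesis
    by (rule uniq_int[OF conjunct1[OF P_spec[OF fH]] inH_Pw[OF assms] V(1,2)])
       (use V(3) Pw_int[OF assms] in auto)
qed

lemma M_germ:
  assumes "open U" "f holomorphic_on U" "good U \<delta>"
  shows "germ_eq c r m (minus_part c r m f) (Mw f \<delta>)"
proof -
  have fH: "inH c r m f" unfolding inH_def using assms good_circles by blast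
  obtain V where V: "open V" "circles c r m \<subseteq> V" "\<forall>z\<in>V \<inter> Dext c r m. minus_part c r m f z = - cauchy_sum c r m f z"
    using M_spec[OF fH] by blast
  show ?thesis
    by (rule uniq_ext[OF conjunct1[OF M_spec[OF fH]] inH_Mw[OF assms] V(1,2)])
       (use V(3) Mw_ext[OF assms] in auto)
qed

lemma decomp:
  assumes "inH c r m f"
  shows "germ_eq c r m (\<lambda>z. plus_part c r m f z + minus_part c r m f z) f"
proof -
  obtain U where U: "open U" "circles c r m \<subseteq> U" "f holomorphic_on U" using assms unfolding inH_def by blast
  obtain \<delta> where g: "good U \<delta>" using good_exists[OF U(1,2)] by blast
  have "germ_eq c r m (\<lambda>z. plus_part c r m f z + minus_part c r m f z) (\<lambda>z. Pw f \<delta> z + Mw f \<delta> z)"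
    using germ_eq_binop[OF P_germ[OF U(1,3) g] M_germ[OF U(1,3) g], of "\<lambda>a b z. a + b"] by simp
  moreover have "germ_eq c r m (\<lambda>z. Pw f \<delta> z + Mw f \<delta> z) f"
    by (rule germ_eqI[OF open_Ann circles_Ann[OF good_pos[OF g]]]) (rule PM_sum[OF U(1,3) g])
  ultimately show ?thesis by (rule germ_eq_trans)
qed

end

context disks begin

lemma sphere_circles: "s \<in> {1..m} \<Longrightarrow> path_image (circlepath (c s) (r s)) \<subseteq> circles c r m"
  using r_pos[of s] unfolding circles_def by auto

lemma cauchy_sum_cong:
  assumes "germ_eq c r m f g"
  shows "cauchy_sum c r m f = cauchy_sum c r m g"
proof
  fix z
  obtain U where U: "circles c r m \<subseteq> U" "\<forall>z\<in>U. f z = g z" using assms unfolding germ_eq_def by blast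
  have "contour_integral (circlepath (c s) (r s)) (\<lambda>p. f p / (p - z)) = contour_integral (circlepath (c s) (r s)) (\<lambda>p. g p / (p - z))"
    if "s \<in> {1..m}" for s
  proof (intro contour_integral_eq)
    fix x assume "x \<in> path_image (circlepath (c s) (r s))"
    hence "x \<in> U" using sphere_circles[OF that] U(1) by blast
    thus "f x / (x - z) = g x / (x - z)" using U(2) by simp
  qed
  thus "cauchy_sum c r m f z = cauchy_sum c r m g z" unfolding cauchy_sum_def by simp
qed

lemma P_cong: "germ_eq c r m f g \<Longrightarrow> plus_part c r m f = plus_part c r m g"
  unfolding plus_part_def using cauchy_sum_cong by simp

lemma M_cong: "germ_eq c r m f g \<Longrightarrow> minus_part c r m f = minus_part c r m g"
  unfolding minus_part_def using cauchy_sum_cong by simp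

lemma inH_int:
  assumes "inH c r m f" "s \<in> {1..m}" "z \<notin> circles c r m"
  shows "(\<lambda>p. f p / (p - z)) contour_integrable_on circlepath (c s) (r s)"
proof -
  obtain U where U: "open U" "circles c r m \<subseteq> U" "f holomorphic_on U" using assms(1) unfolding inH_def by blast
  have "path_image (circlepath (c s) (r s)) \<subseteq> U - {z}" using sphere_circles[OF assms(2)] U assms(3) by auto
  moreover have "(\<lambda>p. f p / (p - z)) holomorphic_on U - {z}"
    using U by (intro holomorphic_intros) (auto intro: holomorphic_on_subset)
  ultimately show ?thesis using U(1) by (intro contour_integrable_holomorphic_simple[of _ "U - {z}"]) auto
qed

lemma cauchy_sum_lin:
  assumes "inH c r m f" "inH c r m g" "z \<notin> circles c r m"
  shows "cauchy_sum c r m (\<lambda>p. \<alpha> * f p + g p) z = \<alpha> * cauchy_sum c r m f z + cauchy_sum c r m g z"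
proof -
  have "contour_integral (circlepath (c s) (r s)) (\<lambda>p. (\<alpha> * f p + g p) / (p - z))
        = \<alpha> * contour_integral (circlepath (c s) (r s)) (\<lambda>p. f p / (p - z)) + contour_integral (circlepath (c s) (r s)) (\<lambda>p. g p / (p - z))"
    if s: "s \<in> {1..m}" for s
  proof -
    have "contour_integral (circlepath (c s) (r s)) (\<lambda>p. (\<alpha> * f p + g p) / (p - z))
        = contour_integral (circlepath (c s) (r s)) (\<lambda>p. \<alpha> * (f p / (p - z)) + g p / (p - z))"
      by (simp add: add_divide_distrib)
    also have "\<dots> = contour_integral (circlepath (c s) (r s)) (\<lambda>p. \<alpha> * (f p / (p - z))) + contour_integral (circlepath (c s) (r s)) (\<lambda>p. g p / (p - z))"
      by (intro contour_integral_add contour_integrable_lmul inH_int assms s)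
    also have "contour_integral (circlepath (c s) (r s)) (\<lambda>p. \<alpha> * (f p / (p - z))) = \<alpha> * contour_integral (circlepath (c s) (r s)) (\<lambda>p. f p / (p - z))"
      by (intro contour_integral_lmul inH_int assms s)
    finally show ?thesis .
  qed
  thus ?thesis unfolding cauchy_sum_def by (simp add: sum.distrib sum_distrib_left algebra_simps)
qed

lemma Dint_nc:
  assumes "z \<in> Dint c r m" shows "z \<notin> circles c r m"
proof
  assume "z \<in> circles c r m"
  then obtain s where s: "s \<in> {1..m}" "dist (c s) z = r s" using circlesE by blast
  obtain j where j: "j \<in> {1..m}" "dist (c j) z < r j" using assms unfolding Dint_def by auto
  show False
  proof (cases "s = j")
    case True thus False using s j by simp
  next
    case False
    have "z \<in> cball (c s) (r s)" "z \<in> cball (c j) (r j)" using s j by auto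
    thus False using disj[OF s(1) j(1) False] by blast
  qed
qed

lemma Dext_nc: "z \<in> Dext c r m \<Longrightarrow> z \<notin> circles c r m"
  unfolding Dext_def circles_def by auto

lemma inH_const: "inH c r m (\<lambda>_. k)"
  unfolding inH_def by (intro exI[of _ UNIV]) auto

lemma inH_binop:
  assumes "inH c r m f" "inH c r m g" "\<And>U. f holomorphic_on U \<Longrightarrow> g holomorphic_on U \<Longrightarrow> h holomorphic_on U"
  shows "inH c r m h"
proof -
  obtain U V where "open U" "circles c r m \<subseteq> U" "f holomorphic_on U" "open V" "circles c r m \<subseteq> V" "g holomorphic_on V"
    using assms(1,2) unfolding inH_def by blast
  thus ?thesis unfolding inH_def using assms(3)[of "U \<inter> V"]
    by (intro exI[of _ "U \<inter> V"]) (auto intro: holomorphic_on_subset)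
qed

lemma inH_add: assumes "inH c r m f" "inH c r m g" shows "inH c r m (\<lambda>z. f z + g z)"
  by (rule inH_binop[OF assms]) (auto intro: holomorphic_intros)
lemma inH_diff: assumes "inH c r m f" "inH c r m g" shows "inH c r m (\<lambda>z. f z - g z)"
  by (rule inH_binop[OF assms]) (auto intro: holomorphic_intros)
lemma inH_mult: assumes "inH c r m f" "inH c r m g" shows "inH c r m (\<lambda>z. f z * g z)"
  by (rule inH_binop[OF assms]) (auto intro: holomorphic_intros)

lemma inH_deriv: "inH c r m f \<Longrightarrow> inH c r m (deriv f)"
  unfolding inH_def by (auto intro: holomorphic_deriv)

lemma inH_P: "inH c r m f \<Longrightarrow> inH c r m (plus_part c r m f)"
  using P_spec by blast
lemma inH_M: "inH c r m f \<Longrightarrow> inH c r m (minus_part c r m f)"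
  using M_spec by blast

lemma P_lin:
  assumes "inH c r m f" "inH c r m g"
  shows "germ_eq c r m (plus_part c r m (\<lambda>p. \<alpha> * f p + g p)) (\<lambda>z. \<alpha> * plus_part c r m f z + plus_part c r m g z)"
proof -
  have h: "inH c r m (\<lambda>p. \<alpha> * f p + g p)" by (intro inH_add inH_mult inH_const assms)
  obtain V1 where V1: "open V1" "circles c r m \<subseteq> V1" "\<forall>z\<in>V1 \<inter> Dint c r m. plus_part c r m (\<lambda>p. \<alpha> * f p + g p) z = cauchy_sum c r m (\<lambda>p. \<alpha> * f p + g p) z"
    using P_spec[OF h] by blast
  obtain V2 where V2: "open V2" "circles c r m \<subseteq> V2" "\<forall>z\<in>V2 \<inter> Dint c r m. plus_part c r m f z = cauchy_sum c r m f z"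
    using P_spec[OF assms(1)] by blast
  obtain V3 where V3: "open V3" "circles c r m \<subseteq> V3" "\<forall>z\<in>V3 \<inter> Dint c r m. plus_part c r m g z = cauchy_sum c r m g z"
    using P_spec[OF assms(2)] by blast
  note nc = Dint_nc
  show ?thesis
  proof (rule uniq_int[OF inH_P[OF h] _ _ _])
    show "inH c r m (\<lambda>z. \<alpha> * plus_part c r m f z + plus_part c r m g z)"
      by (intro inH_add inH_mult inH_const inH_P assms)
    show "open (V1 \<inter> V2 \<inter> V3)" using V1 V2 V3 by auto
    show "circles c r m \<subseteq> V1 \<inter> V2 \<inter> V3" using V1 V2 V3 by auto
    fix z assume "z \<in> V1 \<inter> V2 \<inter> V3" "z \<in> Dint c r m"
    thus "plus_part c r m (\<lambda>p. \<alpha> * f p + g p) z = \<alpha> * plus_part c r m f z + plus_part c r m g z"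
      using V1(3) V2(3) V3(3) cauchy_sum_lin[OF assms nc] by auto
  qed
qed

end

context disks begin

lemma M_lin:
  assumes "inH c r m f" "inH c r m g"
  shows "germ_eq c r m (minus_part c r m (\<lambda>p. \<alpha> * f p + g p)) (\<lambda>z. \<alpha> * minus_part c r m f z + minus_part c r m g z)"
proof -
  have h: "inH c r m (\<lambda>p. \<alpha> * f p + g p)" by (intro inH_add inH_mult inH_const assms)
  obtain V1 where V1: "open V1" "circles c r m \<subseteq> V1" "\<forall>z\<in>V1 \<inter> Dext c r m. minus_part c r m (\<lambda>p. \<alpha> * f p + g p) z = - cauchy_sum c r m (\<lambda>p. \<alpha> * f p + g p) z"
    using M_spec[OF h] by blast
  obtain V2 where V2: "open V2" "circles c r m \<subseteq> V2" "\<forall>z\<in>V2 \<inter> Dext c r m. minus_part c r m f z = - cauchy_sum c r m f z"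
    using M_spec[OF assms(1)] by blast
  obtain V3 where V3: "open V3" "circles c r m \<subseteq> V3" "\<forall>z\<in>V3 \<inter> Dext c r m. minus_part c r m g z = - cauchy_sum c r m g z"
    using M_spec[OF assms(2)] by blast
  show ?thesis
  proof (rule uniq_ext[OF inH_M[OF h] _ _ _])
    show "inH c r m (\<lambda>z. \<alpha> * minus_part c r m f z + minus_part c r m g z)"
      by (intro inH_add inH_mult inH_const inH_M assms)
    show "open (V1 \<inter> V2 \<inter> V3)" using V1 V2 V3 by auto
    show "circles c r m \<subseteq> V1 \<inter> V2 \<inter> V3" using V1 V2 V3 by auto
    fix z assume "z \<in> V1 \<inter> V2 \<inter> V3" "z \<in> Dext c r m"
    thus "minus_part c r m (\<lambda>p. \<alpha> * f p + g p) z = \<alpha> * minus_part c r m f z + minus_part c r m g z"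
      using V1(3) V2(3) V3(3) cauchy_sum_lin[OF assms Dext_nc] by (auto simp: algebra_simps)
  qed
qed

definition Bs :: "real \<Rightarrow> complex set" where
  "Bs \<delta> = (\<Union>s\<in>{1..m}. ball (c s) (r s + \<delta>))"

definition Es :: "real \<Rightarrow> complex set" where
  "Es \<delta> = - (\<Union>s\<in>{1..m}. cball (c s) (r s - \<delta>))"

lemma M_zero:
  assumes d: "\<delta> > 0" and h: "h holomorphic_on Bs \<delta>"
  shows "germ_eq c r m (minus_part c r m h) (\<lambda>_. 0)"
proof -
  have hH: "inH c r m h" unfolding inH_def
  proof (intro exI[of _ "Bs \<delta>"] conjI h)
    show "open (Bs \<delta>)" unfolding Bs_def by auto
    show "circles c r m \<subseteq> Bs \<delta>" unfolding circles_def Bs_def using d by fastforce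
  qed
  obtain V where V: "open V" "circles c r m \<subseteq> V" "\<forall>z\<in>V \<inter> Dext c r m. minus_part c r m h z = - cauchy_sum c r m h z"
    using M_spec[OF hH] by blast
  show ?thesis
  proof (rule uniq_ext[OF inH_M[OF hH] inH_const V(1,2)])
    fix z assume z: "z \<in> V" "z \<in> Dext c r m"
    have "contour_integral (circlepath (c s) (r s)) (\<lambda>p. h p / (p - z)) = 0" if s: "s \<in> {1..m}" for s
    proof -
      have rs: "r s > 0" using r_pos[OF s] .
      have zo: "z \<notin> cball (c s) (r s)" using z(2) s unfolding Dext_def by blast
      have hb: "h holomorphic_on ball (c s) (r s + \<delta>)"
        using h by (rule holomorphic_on_subset) (use s in \<open>auto simp: Bs_def\<close>)
      show ?thesis
      proof (cases "z \<in> ball (c s) (r s + \<delta>)")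
        case True
        have "((\<lambda>w. h w / (w - z)) has_contour_integral (2*pi * \<i> * winding_number (circlepath (c s) (r s)) z * h z)) (circlepath (c s) (r s))"
          using zo True rs d by (intro Cauchy_integral_formula_convex_simple[OF _ hb]) auto
        moreover have "winding_number (circlepath (c s) (r s)) z = 0"
          using zo rs by (intro winding_number_zero_outside[of _ "cball (c s) (r s)"]) auto
        ultimately show ?thesis using contour_integral_unique by fastforce
      next
        case False
        have "((\<lambda>w. h w / (w - z)) has_contour_integral 0) (circlepath (c s) (r s))"
        proof (rule Cauchy_theorem_convex_simple[of _ "ball (c s) (r s + \<delta>)"])
          show "(\<lambda>w. h w / (w - z)) holomorphic_on ball (c s) (r s + \<delta>)"
            using hb False by (intro holomorphic_intros) auto
        qed (use rs d in auto)
        thus ?thesis by (rule contour_integral_unique)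
      qed
    qed
    hence "cauchy_sum c r m h z = 0" unfolding cauchy_sum_def by simp
    thus "minus_part c r m h z = 0" using V(3) z by auto
  qed
qed

lemma P_zero:
  assumes d: "\<delta> > 0" "\<And>s. s \<in> {1..m} \<Longrightarrow> \<delta> < r s" and h: "h holomorphic_on Es \<delta>"
    and lim: "((\<lambda>z. z * h z) \<longlongrightarrow> 0) at_infinity"
  shows "germ_eq c r m (plus_part c r m h) (\<lambda>_. 0)"
proof -
  have oE: "open (Es \<delta>)" unfolding Es_def by (intro open_Compl closed_UN) auto
  have cE: "circles c r m \<subseteq> Es \<delta>"
  proof
    fix z assume "z \<in> circles c r m"
    then obtain j where j: "j \<in> {1..m}" "dist (c j) z = r j" using circlesE by blast
    have "z \<notin> cball (c s) (r s - \<delta>)" if s: "s \<in> {1..m}" for s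
    proof (cases "s = j")
      case True thus ?thesis using j d by auto
    next
      case False
      have "z \<in> cball (c j) (r j)" using j by auto
      moreover have "cball (c s) (r s - \<delta>) \<subseteq> cball (c s) (r s)" using d by auto
      ultimately show ?thesis using disj[OF s j(1) False] by blast
    qed
    thus "z \<in> Es \<delta>" unfolding Es_def by auto
  qed
  have hH: "inH c r m h" unfolding inH_def using oE cE h by blast
  obtain V where V: "open V" "circles c r m \<subseteq> V" "\<forall>z\<in>V \<inter> Dint c r m. plus_part c r m h z = cauchy_sum c r m h z"
    using P_spec[OF hH] by blast
  show ?thesis
  proof (rule uniq_int[OF inH_P[OF hH] inH_const, of "V \<inter> Es \<delta>"])
    show "open (V \<inter> Es \<delta>)" using V oE by auto
    show "circles c r m \<subseteq> V \<inter> Es \<delta>" using V cE by auto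
    fix z assume z: "z \<in> V \<inter> Es \<delta>" "z \<in> Dint c r m"
    obtain j where j: "j \<in> {1..m}" "norm (z - c j) < r j" using z(2) unfolding Dint_def
      by (auto simp: dist_norm norm_minus_commute)
    have zE: "z \<in> Es \<delta>" using z by auto
    have cj: "c j \<notin> Es \<delta>" using j d unfolding Es_def by fastforce
    define F where "F = (\<lambda>p. (if p = z then deriv h z else (h p - h z) / (p - z)) + h z / (p - c j))"
    have Fh: "F holomorphic_on Es \<delta>" unfolding F_def
      using pole_lemma_open[OF h oE, of z] cj by (intro holomorphic_intros) auto
    have Flim: "((\<lambda>p. p * F p) \<longlongrightarrow> 0) at_infinity"
    proof -
      have h0: "(h \<longlongrightarrow> 0) at_infinity" by (rule lim_zf_to_f[OF lim])
      have "((\<lambda>p. h p * (p / (p - z)) - h z * (p / (p - z)) + h z * (p / (p - c j))) \<longlongrightarrow> 0 * 1 - h z * 1 + h z * 1) at_infinity"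
        by (intro tendsto_intros h0 lim_z_over)
      moreover have "eventually (\<lambda>p. h p * (p / (p - z)) - h z * (p / (p - z)) + h z * (p / (p - c j)) = p * F p) at_infinity"
        unfolding eventually_at_infinity
      proof (intro exI allI impI)
        fix p :: complex assume "norm z + 1 \<le> norm p"
        hence "p \<noteq> z" by auto
        define A where "A = 1 / (p - z)"
        define B where "B = 1 / (p - c j)"
        have FA: "F p = (h p - h z) * A + h z * B" using \<open>p \<noteq> z\<close> by (simp add: F_def A_def B_def diff_divide_distrib)
        have AB: "p / (p - z) = p * A" "p / (p - c j) = p * B" by (simp_all add: A_def B_def)
        show "h p * (p / (p - z)) - h z * (p / (p - z)) + h z * (p / (p - c j)) = p * F p"
          unfolding AB FA by (simp add: algebra_simps)
      qed
      ultimately show ?thesis by (auto intro: Lim_transform_eventually)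
    qed
    have gs: "(\<Sum>s\<in>{1..m}. contour_integral (circlepath (c s) (r s)) F) = 2 * of_real pi * \<i> * 0"
    proof (rule global_sum[where \<rho> = "\<lambda>s. r s - \<delta>"])
      show "F holomorphic_on - (\<Union>s\<in>{1..m}. cball (c s) (r s - \<delta>))" using Fh unfolding Es_def .
    qed (use d disj Flim in auto)
    have each: "contour_integral (circlepath (c s) (r s)) (\<lambda>p. h p / (p - z)) = contour_integral (circlepath (c s) (r s)) F"
      if s: "s \<in> {1..m}" for s
    proof -
      have rs: "r s > 0" using r_pos[OF s] .
      have pE: "path_image (circlepath (c s) (r s)) \<subseteq> Es \<delta>" using cE sphere_circles[OF s] by blast
      have iF: "(F has_contour_integral contour_integral (circlepath (c s) (r s)) F) (circlepath (c s) (r s))"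
        using contour_integrable_holomorphic_simple[OF Fh oE _ pE] has_contour_integral_integral by auto
      obtain e where e1: "((\<lambda>p. 1 / (p - c j)) has_contour_integral e) (circlepath (c s) (r s))"
                 and e2: "((\<lambda>p. 1 / (p - z)) has_contour_integral e) (circlepath (c s) (r s))"
      proof (cases "s = j")
        case True
        show ?thesis using that[OF inv_in inv_in] True j r_pos[OF s] by simp
      next
        case False
        have dd: "r s + r j < dist (c s) (c j)" using cball_disj_dist[OF disj[OF s j(1) False]] rs r_pos[OF j(1)] by simp
        have "dist (c s) (c j) \<le> norm (z - c s) + norm (z - c j)"
          using dist_triangle[of "c s" "c j" z] by (simp add: dist_norm norm_minus_commute)
        hence "dist (c s) (c j) - r j \<le> norm (z - c s)" using j by simp
        moreover have "dist (c s) (c j) - r j \<le> norm (c j - c s)" using r_pos[OF j(1)] by (simp add: dist_norm norm_minus_commute)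
        ultimately show ?thesis
          using that[OF inv_out[OF rs, of "dist (c s) (c j) - r j"] inv_out[OF rs, of "dist (c s) (c j) - r j"]] dd by simp
      qed
      have "((\<lambda>p. F p - h z * (1 / (p - c j)) + h z * (1 / (p - z))) has_contour_integral
              (contour_integral (circlepath (c s) (r s)) F - h z * e + h z * e)) (circlepath (c s) (r s))"
        by (intro has_contour_integral_add has_contour_integral_diff has_contour_integral_lmul iF e1 e2)
      hence "((\<lambda>p. F p - h z * (1 / (p - c j)) + h z * (1 / (p - z))) has_contour_integral
              contour_integral (circlepath (c s) (r s)) F) (circlepath (c s) (r s))" by simp
      hence "((\<lambda>p. h p / (p - z)) has_contour_integral contour_integral (circlepath (c s) (r s)) F) (circlepath (c s) (r s))"
      proof (rule has_contour_integral_eq)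
        fix p assume "p \<in> path_image (circlepath (c s) (r s))"
        hence "p \<noteq> z" using Dint_nc[OF z(2)] sphere_circles[OF s] by auto
        thus "F p - h z * (1 / (p - c j)) + h z * (1 / (p - z)) = h p / (p - z)"
          unfolding F_def by (simp add: diff_divide_distrib)
      qed
      thus ?thesis by (rule contour_integral_unique)
    qed
    have "cauchy_sum c r m h z = 0" unfolding cauchy_sum_def using each gs by simp
    thus "plus_part c r m h z = 0" using V(3) z by auto
  qed
qed

end

context disks begin

lemma Bs_sub_SP:
  assumes "good U \<delta>'" "0 < \<delta>" "\<delta> \<le> \<delta>'"
  shows "Bs \<delta> \<subseteq> SP \<delta>'"
proof
  fix z assume "z \<in> Bs \<delta>"
  then obtain j where j: "j \<in> {1..m}" "norm (z - c j) < r j + \<delta>" unfolding Bs_def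
    by (auto simp: dist_norm norm_minus_commute)
  have "z \<notin> sphere (c s) (r s + \<delta>')" if s: "s \<in> {1..m}" for s
  proof (cases "s = j")
    case True thus ?thesis using j assms by (auto simp: dist_norm norm_minus_commute)
  next
    case False
    have "r s + 4 * \<delta>' - \<delta> < norm (z - c s)" using far[OF assms(1) s j(1) False] j by simp
    thus ?thesis using assms good_pos[OF assms(1)] by (auto simp: dist_norm norm_minus_commute)
  qed
  thus "z \<in> SP \<delta>'" unfolding SP_def by auto
qed

lemma Es_sub_SM:
  assumes "good U \<delta>'" "\<delta> \<le> \<delta>'"
  shows "Es \<delta> \<subseteq> SM \<delta>'"
proof
  fix z assume "z \<in> Es \<delta>"
  hence "z \<notin> cball (c s) (r s - \<delta>)" if "s \<in> {1..m}" for s using that unfolding Es_def by blast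
  hence "z \<notin> sphere (c s) (r s - \<delta>')" if "s \<in> {1..m}" for s using that assms(2) by fastforce
  thus "z \<in> SM \<delta>'" unfolding SM_def by auto
qed

lemma Mw_lim:
  assumes "open U" "f holomorphic_on U" "good U \<delta>"
  shows "\<exists>L. ((\<lambda>z. z * Mw f \<delta> z) \<longlongrightarrow> L) at_infinity"
proof -
  have lim: "((\<lambda>z. z * contour_integral (circlepath (c s) (r s - \<delta>)) (\<lambda>p. f p / (p - z)))
           \<longlongrightarrow> - contour_integral (circlepath (c s) (r s - \<delta>)) f) at_infinity" if s: "s \<in> {1..m}" for s
  proof (rule cauchy_limit)
    show "0 < r s - \<delta>" using good_r[OF assms(3) s] good_pos[OF assms(3)] by simp
    have "sphere (c s) (r s - \<delta>) \<subseteq> U"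
      using good_U[OF assms(3) s] good_pos[OF assms(3)] by (auto simp: dist_norm norm_minus_commute)
    thus "continuous_on (sphere (c s) (r s - \<delta>)) f"
      using assms(2) by (auto intro: holomorphic_on_imp_continuous_on holomorphic_on_subset)
  qed
  have "((\<lambda>z. - (1 / (2 * of_real pi * \<i>)) * (\<Sum>s=1..m. z * contour_integral (circlepath (c s) (r s - \<delta>)) (\<lambda>p. f p / (p - z))))
         \<longlongrightarrow> - (1 / (2 * of_real pi * \<i>)) * (\<Sum>s=1..m. - contour_integral (circlepath (c s) (r s - \<delta>)) f)) at_infinity"
    by (intro tendsto_mult_left tendsto_sum lim) simp
  moreover have "(\<lambda>z. - (1 / (2 * of_real pi * \<i>)) * (\<Sum>s=1..m. z * contour_integral (circlepath (c s) (r s - \<delta>)) (\<lambda>p. f p / (p - z))))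
       = (\<lambda>z. z * Mw f \<delta> z)"
    unfolding Mw_def by (simp add: sum_distrib_left algebra_simps)
  ultimately show ?thesis by auto
qed

lemma M_PP:
  assumes "inH c r m f" "inH c r m g"
  shows "germ_eq c r m (minus_part c r m (\<lambda>z. plus_part c r m f z * plus_part c r m g z)) (\<lambda>_. 0)"
proof -
  obtain Uf where Uf: "open Uf" "circles c r m \<subseteq> Uf" "f holomorphic_on Uf" using assms(1) unfolding inH_def by blast
  obtain Ug where Ug: "open Ug" "circles c r m \<subseteq> Ug" "g holomorphic_on Ug" using assms(2) unfolding inH_def by blast
  obtain df where df: "good Uf df" using good_exists[OF Uf(1,2)] by blast
  obtain dg where dg: "good Ug dg" using good_exists[OF Ug(1,2)] by blast
  define \<delta> where "\<delta> = min df dg"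
  have dpos: "\<delta> > 0" unfolding \<delta>_def using good_pos[OF df] good_pos[OF dg] by simp
  have ge: "germ_eq c r m (\<lambda>z. plus_part c r m f z * plus_part c r m g z) (\<lambda>z. Pw f df z * Pw g dg z)"
    using germ_eq_binop[OF P_germ[OF Uf(1,3) df] P_germ[OF Ug(1,3) dg], of "\<lambda>a b z. a * b"] by simp
  have hol: "(\<lambda>z. Pw f df z * Pw g dg z) holomorphic_on Bs \<delta>"
  proof (intro holomorphic_intros)
    show "Pw f df holomorphic_on Bs \<delta>"
      by (rule holomorphic_on_subset[OF Pw_hol[OF Uf(1,3) df] Bs_sub_SP[OF df dpos]]) (simp add: \<delta>_def)
    show "Pw g dg holomorphic_on Bs \<delta>"
      by (rule holomorphic_on_subset[OF Pw_hol[OF Ug(1,3) dg] Bs_sub_SP[OF dg dpos]]) (simp add: \<delta>_def)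
  qed
  show ?thesis unfolding M_cong[OF ge] by (rule M_zero[OF dpos hol])
qed

lemma P_MM:
  assumes "inH c r m f" "inH c r m g"
  shows "germ_eq c r m (plus_part c r m (\<lambda>z. minus_part c r m f z * minus_part c r m g z)) (\<lambda>_. 0)"
proof -
  obtain Uf where Uf: "open Uf" "circles c r m \<subseteq> Uf" "f holomorphic_on Uf" using assms(1) unfolding inH_def by blast
  obtain Ug where Ug: "open Ug" "circles c r m \<subseteq> Ug" "g holomorphic_on Ug" using assms(2) unfolding inH_def by blast
  obtain df where df: "good Uf df" using good_exists[OF Uf(1,2)] by blast
  obtain dg where dg: "good Ug dg" using good_exists[OF Ug(1,2)] by blast
  define \<delta> where "\<delta> = min df dg"
  have dpos: "\<delta> > 0" unfolding \<delta>_def using good_pos[OF df] good_pos[OF dg] by simp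
  have dr: "\<delta> < r s" if "s \<in> {1..m}" for s
    using good_r[OF df that] good_pos[OF df] unfolding \<delta>_def by linarith
  have ge: "germ_eq c r m (\<lambda>z. minus_part c r m f z * minus_part c r m g z) (\<lambda>z. Mw f df z * Mw g dg z)"
    using germ_eq_binop[OF M_germ[OF Uf(1,3) df] M_germ[OF Ug(1,3) dg], of "\<lambda>a b z. a * b"] by simp
  have hol: "(\<lambda>z. Mw f df z * Mw g dg z) holomorphic_on Es \<delta>"
  proof (intro holomorphic_intros)
    show "Mw f df holomorphic_on Es \<delta>"
      by (rule holomorphic_on_subset[OF Mw_hol[OF Uf(1,3) df] Es_sub_SM[OF df]]) (simp add: \<delta>_def)
    show "Mw g dg holomorphic_on Es \<delta>"
      by (rule holomorphic_on_subset[OF Mw_hol[OF Ug(1,3) dg] Es_sub_SM[OF dg]]) (simp add: \<delta>_def)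
  qed
  obtain Lf where Lf: "((\<lambda>z. z * Mw f df z) \<longlongrightarrow> Lf) at_infinity" using Mw_lim[OF Uf(1,3) df] by blast
  obtain Lg where Lg: "((\<lambda>z. z * Mw g dg z) \<longlongrightarrow> Lg) at_infinity" using Mw_lim[OF Ug(1,3) dg] by blast
  have "((\<lambda>z. (z * Mw f df z) * Mw g dg z) \<longlongrightarrow> Lf * 0) at_infinity"
    by (intro tendsto_mult Lf lim_zf_to_f[OF Lg])
  hence lim: "((\<lambda>z. z * (Mw f df z * Mw g dg z)) \<longlongrightarrow> 0) at_infinity" by (simp add: mult.assoc)
  show ?thesis unfolding P_cong[OF ge] by (rule P_zero[OF dpos dr hol lim])
qed

end

definition Fc :: "(nat \<Rightarrow> complex) \<Rightarrow> (nat \<Rightarrow> real) \<Rightarrow> nat \<Rightarrow> complex filter" where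
  "Fc c r m = (INF U\<in>{U. open U \<and> circles c r m \<subseteq> U}. principal U)"

lemma eventually_Fc:
  "eventually P (Fc c r m) \<longleftrightarrow> (\<exists>U. open U \<and> circles c r m \<subseteq> U \<and> (\<forall>z\<in>U. P z))"
  unfolding Fc_def
proof (subst eventually_INF_base)
  show "{U. open U \<and> circles c r m \<subseteq> U} \<noteq> {}" by (auto intro: exI[of _ UNIV])
  fix a b assume "a \<in> {U. open U \<and> circles c r m \<subseteq> U}" "b \<in> {U. open U \<and> circles c r m \<subseteq> U}"
  thus "\<exists>x\<in>{U. open U \<and> circles c r m \<subseteq> U}. principal x \<le> inf (principal a) (principal b)"
    by (intro bexI[of _ "a \<inter> b"]) auto
qed (auto simp: eventually_principal)

lemma germ_eq_ev: "germ_eq c r m f g \<longleftrightarrow> eventually (\<lambda>z. f z = g z) (Fc c r m)"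
  unfolding germ_eq_def eventually_Fc ..

lemma germ_eq2_ev: "germ_eq2 c r m x y \<longleftrightarrow> eventually (\<lambda>z. fst x z = fst y z) (Fc c r m) \<and> eventually (\<lambda>z. snd x z = snd y z) (Fc c r m)"
  unfolding germ_eq2_def germ_eq_ev ..

context disks begin

lemma M_add:
  assumes "inH c r m f" "inH c r m g"
  shows "eventually (\<lambda>z. minus_part c r m (\<lambda>p. f p + g p) z = minus_part c r m f z + minus_part c r m g z) (Fc c r m)"
  using M_lin[OF assms, of 1] unfolding germ_eq_ev by simp

lemma P_ev:
  assumes "inH c r m f"
  shows "eventually (\<lambda>z. plus_part c r m f z = f z - minus_part c r m f z) (Fc c r m)"
  using decomp[OF assms] unfolding germ_eq_ev by (auto elim: eventually_mono simp: algebra_simps)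

end

locale setting = disks +
  fixes a ah :: "complex \<Rightarrow> complex"
  assumes aH: "inH c r m a" and ahH: "inH c r m ah"
begin

abbreviation "A \<equiv> deriv a"
abbreviation "Ah \<equiv> deriv ah"
abbreviation "P \<equiv> plus_part c r m"
abbreviation "M \<equiv> minus_part c r m"
abbreviation "F \<equiv> Fc c r m"

lemma AH: "inH c r m A" using inH_deriv[OF aH] .
lemma AhH: "inH c r m Ah" using inH_deriv[OF ahH] .

definition sf :: "(complex \<Rightarrow> complex) \<Rightarrow> (complex \<Rightarrow> complex) \<Rightarrow> complex \<Rightarrow> complex" where
  "sf w h = (\<lambda>p. w p * A p + h p * Ah p)"

lemma sfH: "inH c r m w \<Longrightarrow> inH c r m h \<Longrightarrow> inH c r m (sf w h)"
  unfolding sf_def by (intro inH_add inH_mult AH AhH)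

lemma circ_fst: "fst (circ_prod c r m a ah (w1, h1) (w2, h2)) = (\<lambda>z. w2 z * P (\<lambda>p. w1 p * A p) z - w1 z * M (\<lambda>p. w2 p * A p) z
             - w2 z * M (\<lambda>p. h1 p * Ah p) z - w1 z * M (\<lambda>p. h2 p * Ah p) z)"
  unfolding circ_prod_def Let_def by simp

lemma circ_snd: "snd (circ_prod c r m a ah (w1, h1) (w2, h2)) = (\<lambda>z. h2 z * P (\<lambda>p. h1 p * Ah p) z - h1 z * M (\<lambda>p. h2 p * Ah p) z
             + h1 z * P (\<lambda>p. w2 p * A p) z + h2 z * P (\<lambda>p. w1 p * A p) z)"
  unfolding circ_prod_def Let_def by simp

lemma K:
  assumes H: "inH c r m w1" "inH c r m h1" "inH c r m w2" "inH c r m h2"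
  shows "eventually (\<lambda>z. fst (circ_prod c r m a ah (w1, h1) (w2, h2)) z
            = w1 z * w2 z * A z - w1 z * M (sf w2 h2) z - w2 z * M (sf w1 h1) z
          \<and> snd (circ_prod c r m a ah (w1, h1) (w2, h2)) z
            = h1 z * h2 z * Ah z + (h1 z * w2 z + w1 z * h2 z) * A z - h1 z * M (sf w2 h2) z - h2 z * M (sf w1 h1) z) F"
proof -
  have H': "inH c r m (\<lambda>p. w1 p * A p)" "inH c r m (\<lambda>p. w2 p * A p)"
           "inH c r m (\<lambda>p. h1 p * Ah p)" "inH c r m (\<lambda>p. h2 p * Ah p)"
    by (intro inH_mult H AH AhH)+
  note e1 = P_ev[OF H'(1)] and e2 = P_ev[OF H'(2)] and e3 = P_ev[OF H'(3)]
  note e4 = M_add[OF H'(1) H'(3)] and e5 = M_add[OF H'(2) H'(4)]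
  show ?thesis unfolding circ_fst circ_snd sf_def
    using e1 e2 e3 e4 e5
  proof eventually_elim
    case (elim z)
    show ?case unfolding elim(1) elim(2) elim(3) elim(4) elim(5) by (simp add: algebra_simps)
  qed
qed


lemma Msu:
  assumes H: "inH c r m w1" "inH c r m h1" "inH c r m w2" "inH c r m h2"
  shows "eventually (\<lambda>z. M (sf (fst (circ_prod c r m a ah (w1, h1) (w2, h2))) (snd (circ_prod c r m a ah (w1, h1) (w2, h2)))) z
            = - M (sf w1 h1) z * M (sf w2 h2) z) F"
proof -
  define sx where "sx = sf w1 h1"
  define sy where "sy = sf w2 h2"
  have sxH: "inH c r m sx" unfolding sx_def by (intro sfH H)
  have syH: "inH c r m sy" unfolding sy_def by (intro sfH H)
  define q where "q = (\<lambda>p. (-1) * (M sx p * M sy p) + P sx p * P sy p)"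
  have gq: "germ_eq c r m (sf (fst (circ_prod c r m a ah (w1, h1) (w2, h2))) (snd (circ_prod c r m a ah (w1, h1) (w2, h2)))) q"
    unfolding germ_eq_ev using K[OF H] P_ev[OF sxH] P_ev[OF syH]
  proof eventually_elim
    case (elim z)
    have sx: "sx z = w1 z * A z + h1 z * Ah z" unfolding sx_def sf_def by simp
    have sy: "sy z = w2 z * A z + h2 z * Ah z" unfolding sy_def sf_def by simp
    have lhs: "\<And>f g. sf f g z = f z * A z + g z * Ah z" by (simp add: sf_def)
    show ?case unfolding q_def lhs elim(1)[THEN conjunct1] elim(1)[THEN conjunct2] elim(2) elim(3)
      unfolding sx_def[symmetric] sy_def[symmetric] sx sy by (simp add: algebra_simps)
  qed
  have LinM: "germ_eq c r m (M q) (\<lambda>z. (-1) * M (\<lambda>z. M sx z * M sy z) z + M (\<lambda>z. P sx z * P sy z) z)"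
    unfolding q_def by (rule M_lin) (intro inH_mult inH_M inH_P sxH syH)+
  have PP: "germ_eq c r m (M (\<lambda>z. P sx z * P sy z)) (\<lambda>_. 0)" by (rule M_PP[OF sxH syH])
  have MM0: "germ_eq c r m (P (\<lambda>z. M sx z * M sy z)) (\<lambda>_. 0)" by (rule P_MM[OF sxH syH])
  have MMd: "eventually (\<lambda>z. P (\<lambda>z. M sx z * M sy z) z = M sx z * M sy z - M (\<lambda>z. M sx z * M sy z) z) F"
    by (rule P_ev) (intro inH_mult inH_M sxH syH)
  show ?thesis unfolding M_cong[OF gq] sx_def[symmetric] sy_def[symmetric]
    using LinM PP MM0 MMd unfolding germ_eq_ev by eventually_elim simp
qed

lemma closure:
  assumes "inHH c r m x" "inHH c r m y"
  shows "inHH c r m (circ_prod c r m a ah x y)"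
proof -
  obtain w1 h1 where x: "x = (w1, h1)" by (cases x)
  obtain w2 h2 where y: "y = (w2, h2)" by (cases y)
  have H: "inH c r m w1" "inH c r m h1" "inH c r m w2" "inH c r m h2" using assms unfolding x y inHH_def by auto
  show ?thesis unfolding x y inHH_def circ_fst circ_snd
    by (intro conjI inH_add inH_diff inH_mult inH_P inH_M H AH AhH)
qed

lemma bilin:
  assumes "inHH c r m x" "inHH c r m y" "inHH c r m z"
  shows "germ_eq2 c r m (circ_prod c r m a ah (lin2 \<alpha> x y) z) (lin2 \<alpha> (circ_prod c r m a ah x z) (circ_prod c r m a ah y z))"
proof -
  obtain w1 h1 where x: "x = (w1, h1)" by (cases x)
  obtain w2 h2 where y: "y = (w2, h2)" by (cases y)
  obtain w3 h3 where z: "z = (w3, h3)" by (cases z)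
  have H: "inH c r m w1" "inH c r m h1" "inH c r m w2" "inH c r m h2" "inH c r m w3" "inH c r m h3"
    using assms unfolding x y z inHH_def by auto
  have H': "inH c r m (\<lambda>p. w1 p * A p)" "inH c r m (\<lambda>p. w2 p * A p)"
           "inH c r m (\<lambda>p. h1 p * Ah p)" "inH c r m (\<lambda>p. h2 p * Ah p)"
    by (intro inH_mult H AH AhH)+
  have l: "lin2 \<alpha> (w1, h1) (w2, h2) = (\<lambda>z. \<alpha> * w1 z + w2 z, \<lambda>z. \<alpha> * h1 z + h2 z)" unfolding lin2_def by simp
  have eqA: "(\<lambda>p. (\<alpha> * w1 p + w2 p) * A p) = (\<lambda>p. \<alpha> * (w1 p * A p) + w2 p * A p)" by (rule ext) (simp add: algebra_simps)
  have eqAh: "(\<lambda>p. (\<alpha> * h1 p + h2 p) * Ah p) = (\<lambda>p. \<alpha> * (h1 p * Ah p) + h2 p * Ah p)" by (rule ext) (simp add: algebra_simps)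
  note e1 = P_lin[OF H'(1,2), of \<alpha>, unfolded germ_eq_ev]
  note e2 = M_lin[OF H'(1,2), of \<alpha>, unfolded germ_eq_ev]
  note e3 = P_lin[OF H'(3,4), of \<alpha>, unfolded germ_eq_ev]
  note e4 = M_lin[OF H'(3,4), of \<alpha>, unfolded germ_eq_ev]
  show ?thesis unfolding germ_eq2_ev x y z l
  proof
    show "eventually (\<lambda>za. fst (circ_prod c r m a ah (\<lambda>z. \<alpha> * w1 z + w2 z, \<lambda>z. \<alpha> * h1 z + h2 z) (w3, h3)) za =
        fst (lin2 \<alpha> (circ_prod c r m a ah (w1, h1) (w3, h3)) (circ_prod c r m a ah (w2, h2) (w3, h3))) za) F"
      unfolding circ_fst lin2_def fst_conv eqA eqAh using e1 e2 e3 e4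
    proof eventually_elim
      case (elim z)
      show ?case unfolding elim by (simp add: algebra_simps)
    qed
    show "eventually (\<lambda>za. snd (circ_prod c r m a ah (\<lambda>z. \<alpha> * w1 z + w2 z, \<lambda>z. \<alpha> * h1 z + h2 z) (w3, h3)) za =
        snd (lin2 \<alpha> (circ_prod c r m a ah (w1, h1) (w3, h3)) (circ_prod c r m a ah (w2, h2) (w3, h3))) za) F"
      unfolding circ_snd lin2_def snd_conv eqA eqAh using e1 e2 e3 e4
    proof eventually_elim
      case (elim z)
      show ?case unfolding elim by (simp add: algebra_simps)
    qed
  qed
qed

lemma comm:
  assumes "inHH c r m x" "inHH c r m y"
  shows "germ_eq2 c r m (circ_prod c r m a ah x y) (circ_prod c r m a ah y x)"
proof -
  obtain w1 h1 where x: "x = (w1, h1)" by (cases x)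
  obtain w2 h2 where y: "y = (w2, h2)" by (cases y)
  have H: "inH c r m w1" "inH c r m h1" "inH c r m w2" "inH c r m h2" using assms unfolding x y inHH_def by auto
  have "eventually (\<lambda>z. fst (circ_prod c r m a ah x y) z = fst (circ_prod c r m a ah y x) z
                  \<and> snd (circ_prod c r m a ah x y) z = snd (circ_prod c r m a ah y x) z) F"
    unfolding x y using K[OF H] K[OF H(3,4,1,2)]
  proof eventually_elim
    case (elim z)
    show ?case unfolding elim(1)[THEN conjunct1] elim(1)[THEN conjunct2] elim(2)[THEN conjunct1] elim(2)[THEN conjunct2]
      by (simp add: algebra_simps)
  qed
  thus ?thesis unfolding germ_eq2_ev by (auto elim: eventually_mono)
qed

lemma assoc:
  assumes "inHH c r m x" "inHH c r m y" "inHH c r m z"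
  shows "germ_eq2 c r m (circ_prod c r m a ah (circ_prod c r m a ah x y) z) (circ_prod c r m a ah x (circ_prod c r m a ah y z))"
proof -
  obtain w1 h1 where x: "x = (w1, h1)" by (cases x)
  obtain w2 h2 where y: "y = (w2, h2)" by (cases y)
  obtain w3 h3 where z: "z = (w3, h3)" by (cases z)
  have H: "inH c r m w1" "inH c r m h1" "inH c r m w2" "inH c r m h2" "inH c r m w3" "inH c r m h3"
    using assms unfolding x y z inHH_def by auto
  define u where "u = circ_prod c r m a ah (w1, h1) (w2, h2)"
  define v where "v = circ_prod c r m a ah (w2, h2) (w3, h3)"
  have uH: "inH c r m (fst u)" "inH c r m (snd u)" using closure[OF assms(1,2)] unfolding u_def x y inHH_def by auto
  have vH: "inH c r m (fst v)" "inH c r m (snd v)" using closure[OF assms(2,3)] unfolding v_def y z inHH_def by auto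
  have u: "u = (fst u, snd u)" by simp
  have v: "v = (fst v, snd v)" by simp
  note Kxy = K[OF H(1-4), folded u_def]
  note Kyz = K[OF H(3-6), folded v_def]
  note Kuz = K[OF uH H(5,6), folded u]
  note Kxv = K[OF H(1,2) vH, folded v]
  note Mu = Msu[OF H(1-4), folded u_def]
  note Mv = Msu[OF H(3-6), folded v_def]
  have "eventually (\<lambda>t. fst (circ_prod c r m a ah u (w3, h3)) t = fst (circ_prod c r m a ah (w1, h1) v) t
                  \<and> snd (circ_prod c r m a ah u (w3, h3)) t = snd (circ_prod c r m a ah (w1, h1) v) t) F"
    using Kxy Kyz Kuz Kxv Mu Mv
  proof eventually_elim
    case (elim t)
    show ?case unfolding elim(3)[THEN conjunct1] elim(3)[THEN conjunct2] elim(4)[THEN conjunct1] elim(4)[THEN conjunct2]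
      unfolding elim(5) elim(6) unfolding elim(1)[THEN conjunct1] elim(1)[THEN conjunct2] elim(2)[THEN conjunct1] elim(2)[THEN conjunct2]
      by (simp add: algebra_simps)
  qed
  thus ?thesis unfolding germ_eq2_ev x y z u_def[symmetric] v_def[symmetric] by (auto elim: eventually_mono)
qed

end

theorem lemma2p5:
  fixes m :: nat and n :: "nat \<Rightarrow> nat" and d :: "nat \<Rightarrow> int"
    and c :: "nat \<Rightarrow> complex" and r :: "nat \<Rightarrow> real"
    and a ah :: "complex \<Rightarrow> complex" and \<phi> :: "nat \<Rightarrow> complex"
    and w :: "nat \<Rightarrow> complex \<Rightarrow> complex"
  assumes m: "m \<ge> 1"
    and n_pos: "\<forall>i\<in>{0..m}. n i > 0"
    and d_nz: "\<forall>i\<in>{1..m}. d i \<noteq> 0"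
    and r_pos: "\<forall>i\<in>{1..m}. r i > 0"
    and disj: "\<forall>i\<in>{1..m}. \<forall>j\<in>{1..m}. i \<noteq> j \<longrightarrow> cball (c i) (r i) \<inter> cball (c j) (r j) = {}"
    \<comment> \<open>conditions for (a, ah) in M\<close>
    and a_H: "inH c r m a"
    and a_hol: "a holomorphic_on Dext c r m"
    and a_inf: "(\<lambda>z. a z - z ^ n 0) \<in> O[at_infinity](\<lambda>z. z powi (int (n 0) - 2))"
    and ah_H: "inH c r m ah"
    and phi_in: "\<forall>j\<in>{1..m}. \<phi> j \<in> ball (c j) (r j)"
    and ah_hol: "ah holomorphic_on (Dint c r m - \<phi> ` {1..m})"
    and ah_pole: "\<forall>j\<in>{1..m}. \<exists>L. L \<noteq> 0 \<and> ((\<lambda>z. (z - \<phi> j) ^ n j * ah z) \<longlongrightarrow> L) (at (\<phi> j))"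
    and w_hol: "\<forall>j\<in>{1..m}. \<exists>U. open U \<and> sphere (c j) (r j) \<subseteq> U \<and> w j holomorphic_on U
                   \<and> (\<forall>z\<in>U. deriv (w j) z \<noteq> 0)"
    and w_wind: "\<forall>j\<in>{1..m}. 0 \<notin> path_image (w j \<circ> circlepath (c j) (r j))
                   \<and> winding_number (w j \<circ> circlepath (c j) (r j)) 0 = 1"
    and jump: "\<forall>j\<in>{1..m}. \<forall>z\<in>sphere (c j) (r j). a z - ah z = w j z powi d j"
  shows "(\<forall>x y. inHH c r m x \<and> inHH c r m y \<longrightarrow> inHH c r m (circ_prod c r m a ah x y))
       \<and> (\<forall>\<alpha> x y z. inHH c r m x \<and> inHH c r m y \<and> inHH c r m z \<longrightarrow>
            germ_eq2 c r m (circ_prod c r m a ah (lin2 \<alpha> x y) z)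
                           (lin2 \<alpha> (circ_prod c r m a ah x z) (circ_prod c r m a ah y z)))
       \<and> (\<forall>x y. inHH c r m x \<and> inHH c r m y \<longrightarrow>
            germ_eq2 c r m (circ_prod c r m a ah x y) (circ_prod c r m a ah y x))
       \<and> (\<forall>x y z. inHH c r m x \<and> inHH c r m y \<and> inHH c r m z \<longrightarrow>
            germ_eq2 c r m (circ_prod c r m a ah (circ_prod c r m a ah x y) z)
                           (circ_prod c r m a ah x (circ_prod c r m a ah y z)))"
proof -
  have loc: "setting c r m a ah"
    unfolding setting_def setting_axioms_def disks_def using r_pos disj a_H ah_H by auto
  interpret setting c r m a ah by (rule loc)
  show ?thesis using closure bilin comm assoc by blast
qed

end
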